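(* Let $\mathcal L$ be a sibling $\sigma_d$-invariant lamination and let $\mathcal L^p$ be its perfect part. Then $\mathcal L^p$ is a sibling $\sigma_d$-invariant lamination. If $\mathcal L$ is uncountable, then $\mathcal L^p\subset\mathcal L$ is nonempty. Every chief is either perfect or countable; in the latter case all its nondegenerate leaves are isolated.
   Context: $\mathbb S$ is the unit circle, $\sigma_d(z)=z^d$, $d\ge2$. A chord $\overline{ab}$ joins $a,b\in\mathbb S$; distinct chords cross if they meet in the open unit disk; a chord is critical if $a\ne b$ and $\sigma_d(a)=\sigma_d(b)$. A lamination is a family of pairwise non-crossing chords (leaves) containing all points of $\mathbb S$, whose union is closed; it is sibling $\sigma_d$-invariant if (1) images of leaves are leaves; (2) every leaf is the image of a leaf; (3) every non-critical leaf $\ell$ belongs to $d$ pairwise disjoint leaves $\ell_1=\ell,\dots,\ell_d$ with equal images. All laminations are assumed sibling $\sigma_d$-invariant. A lamination is nonempty if it has a nondegenerate leaf, countable if it has countably many nondegenerate leaves, uncountable otherwise, perfect if no nondegenerate leaf is isolated (isolated = not a Hausdorff limit of other leaves). The perfect part $\mathcal L^p$ is the maximal (by inclusion) perfect sublamination of $\mathcal L$, equivalently the set of leaves $\ell\in\mathcal L$ such that arbitrarily close to $\ell$ there are uncountably many leaves of $\mathcal L$. A chief is a nonempty sibling $\sigma_d$-invariant lamination minimal by inclusion among such. *)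

theory Defs
  imports "HOL-Analysis.Analysis"
begin

text \<open>The unit circle is the complex sphere of radius 1. A chord is represented by the
  set of its endpoints {a, b} (a, b on the circle; a = b gives a degenerate chord);
  the geometric chord is its convex hull, i.e. the closed segment from a to b.\<close>

definition unit_circle :: "complex set" where
  "unit_circle = sphere 0 1"

definition is_chord :: "complex set \<Rightarrow> bool" where
  "is_chord l \<longleftrightarrow> (\<exists>a b. a \<in> unit_circle \<and> b \<in> unit_circle \<and> l = {a, b})"

definition geom :: "complex set \<Rightarrow> complex set" where
  "geom l = convex hull l"

definition nondegenerate :: "complex set \<Rightarrow> bool" where
  "nondegenerate l \<longleftrightarrow> (\<exists>a b. a \<noteq> b \<and> l = {a, b})"

definition sigma_img :: "nat \<Rightarrow> complex set \<Rightarrow> complex set" where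
  "sigma_img d l = (\<lambda>z. z ^ d) ` l"

definition critical :: "nat \<Rightarrow> complex set \<Rightarrow> bool" where
  "critical d l \<longleftrightarrow> (\<exists>a b. l = {a, b} \<and> a \<noteq> b \<and> a ^ d = b ^ d)"

definition cross :: "complex set \<Rightarrow> complex set \<Rightarrow> bool" where
  "cross l1 l2 \<longleftrightarrow> l1 \<noteq> l2 \<and> geom l1 \<inter> geom l2 \<inter> ball 0 1 \<noteq> {}"

definition lamination :: "complex set set \<Rightarrow> bool" where
  "lamination L \<longleftrightarrow>
     (\<forall>l\<in>L. is_chord l) \<and>
     (\<forall>l1\<in>L. \<forall>l2\<in>L. \<not> cross l1 l2) \<and>
     (\<forall>a\<in>unit_circle. {a} \<in> L) \<and>
     closed (\<Union>l\<in>L. geom l)"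

definition sibling_invariant :: "nat \<Rightarrow> complex set set \<Rightarrow> bool" where
  "sibling_invariant d L \<longleftrightarrow>
     lamination L \<and>
     (\<forall>l\<in>L. sigma_img d l \<in> L) \<and>
     (\<forall>l\<in>L. \<exists>l'\<in>L. sigma_img d l' = l) \<and>
     (\<forall>l\<in>L. \<not> critical d l \<longrightarrow>
        (\<exists>f :: nat \<Rightarrow> complex set. f 0 = l \<and>
           (\<forall>i<d. f i \<in> L) \<and>
           (\<forall>i<d. \<forall>j<d. i \<noteq> j \<longrightarrow> geom (f i) \<inter> geom (f j) = {}) \<and>
           (\<forall>i<d. sigma_img d (f i) = sigma_img d l)))"

definition hausdist :: "complex set \<Rightarrow> complex set \<Rightarrow> real" where
  "hausdist S T = max (SUP x\<in>S. setdist {x} T) (SUP y\<in>T. setdist {y} S)"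

definition nonempty_lam :: "complex set set \<Rightarrow> bool" where
  "nonempty_lam L \<longleftrightarrow> (\<exists>l\<in>L. nondegenerate l)"

definition countable_lam :: "complex set set \<Rightarrow> bool" where
  "countable_lam L \<longleftrightarrow> countable {l\<in>L. nondegenerate l}"

definition uncountable_lam :: "complex set set \<Rightarrow> bool" where
  "uncountable_lam L \<longleftrightarrow> \<not> countable_lam L"

definition isolated_leaf :: "complex set set \<Rightarrow> complex set \<Rightarrow> bool" where
  "isolated_leaf L l \<longleftrightarrow>
     \<not> (\<forall>e>0. \<exists>l'\<in>L. l' \<noteq> l \<and> hausdist (geom l') (geom l) < e)"

definition perfect_lam :: "complex set set \<Rightarrow> bool" where
  "perfect_lam L \<longleftrightarrow> (\<forall>l\<in>L. nondegenerate l \<longrightarrow> \<not> isolated_leaf L l)"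

definition perfect_part :: "complex set set \<Rightarrow> complex set set" where
  "perfect_part L = {l\<in>L. \<forall>e>0.
      uncountable {l'\<in>L. hausdist (geom l') (geom l) < e}}"

definition chief :: "nat \<Rightarrow> complex set set \<Rightarrow> bool" where
  "chief d L \<longleftrightarrow> sibling_invariant d L \<and> nonempty_lam L \<and>
     (\<forall>L'. L' \<subseteq> L \<and> sibling_invariant d L' \<and> nonempty_lam L' \<longrightarrow> L' = L)"

end

theory Submission
  imports Defs
begin

lemma SI_lam: "sibling_invariant d L \<Longrightarrow> lamination L"
  unfolding sibling_invariant_def by (elim conjE)
lemma SI_img: "sibling_invariant d L \<Longrightarrow> l \<in> L \<Longrightarrow> sigma_img d l \<in> L"
  unfolding sibling_invariant_def by (elim conjE) (erule bspec)
lemma SI_pre: "sibling_invariant d L \<Longrightarrow> l \<in> L \<Longrightarrow> \<exists>l'\<in>L. sigma_img d l' = l"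
  unfolding sibling_invariant_def by (elim conjE) (erule bspec)
lemma SI_sib: "sibling_invariant d L \<Longrightarrow> l \<in> L \<Longrightarrow> \<not> critical d l \<Longrightarrow>
        (\<exists>f :: nat \<Rightarrow> complex set. f 0 = l \<and>
           (\<forall>i<d. f i \<in> L) \<and>
           (\<forall>i<d. \<forall>j<d. i \<noteq> j \<longrightarrow> geom (f i) \<inter> geom (f j) = {}) \<and>
           (\<forall>i<d. sigma_img d (f i) = sigma_img d l))"
  unfolding sibling_invariant_def by (elim conjE) blast


definition pd :: "complex \<times> complex \<Rightarrow> complex \<times> complex \<Rightarrow> real" where
  "pd x y = min (max (cmod (fst x - fst y)) (cmod (snd x - snd y)))
                (max (cmod (fst x - snd y)) (cmod (snd x - fst y)))"

definition ep :: "complex set \<Rightarrow> complex \<times> complex" where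
  "ep l = (SOME p. l = {fst p, snd p})"

definition cdist :: "complex set \<Rightarrow> complex set \<Rightarrow> real" where
  "cdist l l' = pd (ep l) (ep l')"

lemma pd_swap1: "pd (b,a) y = pd (a,b) y"
  unfolding pd_def by (simp add: norm_minus_commute min.commute max.commute)
lemma pd_swap2: "pd x (b,a) = pd x (a,b)"
  unfolding pd_def by (simp add: norm_minus_commute min.commute max.commute)
lemma pd_sym: "pd x y = pd y x"
  unfolding pd_def by (simp add: norm_minus_commute min.commute max.commute)
lemma pd_nonneg: "pd x y \<ge> 0"
  unfolding pd_def by (simp add: le_max_iff_disj)
lemma pd_self: "pd x x = 0"
  unfolding pd_def by (simp add: min_def le_max_iff_disj)

lemma max_add_aux: "p \<le> r + u \<Longrightarrow> q \<le> s + v \<Longrightarrow> max p q \<le> max r (s::real) + max u v"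
  by (simp add: max_def)

lemma pd_cases: "pd (a,b) (c,e) = max (cmod (a-c)) (cmod (b-e)) \<or> pd (a,b) (c,e) = max (cmod (a-e)) (cmod (b-c))"
  unfolding pd_def by (simp add: min_def le_max_iff_disj)

lemma pd_le1: "pd (a,b) (c,e) \<le> max (cmod (a-c)) (cmod (b-e))"
  unfolding pd_def by simp
lemma pd_le2: "pd (a,b) (c,e) \<le> max (cmod (a-e)) (cmod (b-c))"
  unfolding pd_def by simp

lemma tri: "cmod (u - w) \<le> cmod (u - v) + cmod (v - w)"
  by (metis diff_add_cancel norm_triangle_ineq add_diff_eq diff_diff_eq2)

lemma pd_triangle: "pd x z \<le> pd x y + pd y z"
proof -
  obtain a b where x: "x = (a,b)" by (cases x)
  obtain c e where y: "y = (c,e)" by (cases y)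
  obtain f g where z: "z = (f,g)" by (cases z)
  have A: "max (cmod (a-f)) (cmod (b-g)) \<le> max (cmod (a-c)) (cmod (b-e)) + max (cmod (c-f)) (cmod (e-g))"
    by (intro max_add_aux tri)
  have B: "max (cmod (a-g)) (cmod (b-f)) \<le> max (cmod (a-c)) (cmod (b-e)) + max (cmod (c-g)) (cmod (e-f))"
    by (intro max_add_aux tri)
  have C: "max (cmod (a-g)) (cmod (b-f)) \<le> max (cmod (a-e)) (cmod (b-c)) + max (cmod (e-g)) (cmod (c-f))"
    by (intro max_add_aux tri)
  have D: "max (cmod (a-f)) (cmod (b-g)) \<le> max (cmod (a-e)) (cmod (b-c)) + max (cmod (e-f)) (cmod (c-g))"
    by (intro max_add_aux tri)
  have E: "max (cmod (c-g)) (cmod (e-f)) = max (cmod (e-f)) (cmod (c-g))" by (rule max.commute)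
  show ?thesis unfolding x y z
    using pd_cases[of a b c e] pd_cases[of c e f g] pd_le1[of a b f g] pd_le2[of a b f g] A B C D E
    by (elim disjE) linarith+
qed

lemma ep_eq: assumes "l = {a,b}" shows "ep l = (a,b) \<or> ep l = (b,a)"
proof -
  have "l = {fst (ep l), snd (ep l)}"
    unfolding ep_def by (rule someI[of _ "(a,b)"]) (simp add: assms)
  then show ?thesis using assms by (cases "ep l") (auto simp: doubleton_eq_iff)
qed

lemma cdist_eq: "cdist {a,b} {c,e} = pd (a,b) (c,e)"
  using ep_eq[of "{a,b}" a b] ep_eq[of "{c,e}" c e]
  unfolding cdist_def by (auto simp: pd_swap1 pd_swap2)

lemma pd_zero: assumes "pd (a,b) (c,e) = 0" shows "{a,b} = {c,e}"
  using assms unfolding pd_def by (auto simp: min_def max_def split: if_splits)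



lemma chordE:
  assumes "is_chord l"
  obtains a b where "cmod a = 1" "cmod b = 1" "l = {a,b}"
  using assms unfolding is_chord_def unit_circle_def by auto

lemma geom_eq: "geom {a,b} = closed_segment a b"
  unfolding geom_def by (simp add: segment_convex_hull)

lemma cdist_sym: "cdist l l' = cdist l' l"
  unfolding cdist_def by (rule pd_sym)
lemma cdist_triangle: "cdist l n \<le> cdist l m + cdist m n"
  unfolding cdist_def by (rule pd_triangle)
lemma cdist_nonneg: "cdist l l' \<ge> 0"
  unfolding cdist_def by (rule pd_nonneg)
lemma cdist_self: "cdist l l = 0"
  unfolding cdist_def by (rule pd_self)
lemma cdist_zero: "cdist {a,b} {c,e} = 0 \<Longrightarrow> {a,b} = {c,e}"
  by (simp add: cdist_eq pd_zero)

lemma variance_id: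
  fixes a c e :: complex
  shows "(1-t) * (cmod (a - c))^2 + t * (cmod (a - e))^2
       = (cmod (a - ((1-t) *\<^sub>R c + t *\<^sub>R e)))^2 + t*(1-t) * (cmod (c - e))^2"
  unfolding cmod_power2 by (simp add: power2_eq_square algebra_simps)

lemma seg_point_bound:
  assumes "x \<in> closed_segment c e"
  shows "cmod (a - x) \<le> max (cmod (a - c)) (cmod (a - e))"
proof -
  have "convex (cball a (max (cmod (a - c)) (cmod (a - e))))" by simp
  moreover have "c \<in> cball a (max (cmod (a - c)) (cmod (a - e)))"
    "e \<in> cball a (max (cmod (a - c)) (cmod (a - e)))" by (auto simp: dist_norm)
  ultimately have "closed_segment c e \<subseteq> cball a (max (cmod (a - c)) (cmod (a - e)))"
    by (simp add: closed_segment_subset)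
  then show ?thesis using assms by (auto simp: dist_norm)
qed

lemma seg_near_endpoint:
  fixes a c e x :: complex
  assumes "cmod a = 1" "cmod c = 1" "cmod e = 1" "x \<in> closed_segment c e" "cmod (a - x) < h"
  shows "cmod (a - c) < sqrt (h^2 + 2*h) \<or> cmod (a - e) < sqrt (h^2 + 2*h)"
proof -
  obtain t where t: "0 \<le> t" "t \<le> 1" "x = (1 - t) *\<^sub>R c + t *\<^sub>R e"
    using assms(4) by (auto simp: in_segment)
  have h0: "h > 0" using assms(5) norm_ge_zero[of "a - x"] by linarith
  have V1: "(1-t) * (cmod (a - c))^2 + t * (cmod (a - e))^2
       = (cmod (a - x))^2 + t*(1-t) * (cmod (c - e))^2"
    using variance_id[of t a c e] t by simp
  have V0: "(1-t) * (cmod (0 - c))^2 + t * (cmod (0 - e))^2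
       = (cmod (0 - x))^2 + t*(1-t) * (cmod (c - e))^2"
    using variance_id[of t 0 c e] t by simp
  hence V0': "1 - (cmod x)^2 = t*(1-t) * (cmod (c - e))^2"
    using assms(2,3) by simp
  have "cmod x \<ge> cmod a - cmod (a - x)"
    using norm_triangle_ineq2[of a x] by linarith
  hence xg: "cmod x > 1 - h" using assms(1,5) by linarith
  have "1 - (cmod x)^2 < 2*h"
  proof (cases "h \<le> 1")
    case True
    have "(1-h)^2 \<le> (cmod x)^2" using xg True by (intro power_mono) auto
    moreover have "(1-h)^2 = 1 - 2*h + h^2" by (simp add: power2_eq_square algebra_simps)
    moreover have "h^2 > 0" using h0 by simp
    ultimately show ?thesis by linarith
  next
    case False
    have "0 \<le> (cmod x)^2" by simp
    then show ?thesis using False by linarith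
  qed
  moreover have "(cmod (a - x))^2 < h^2" using assms(5) by (simp add: power_strict_mono)
  ultimately have S: "(1-t) * (cmod (a - c))^2 + t * (cmod (a - e))^2 < h^2 + 2*h"
    using V1 V0' by linarith
  have "min ((cmod (a - c))^2) ((cmod (a - e))^2) \<le> (1-t) * (cmod (a - c))^2 + t * (cmod (a - e))^2"
  proof -
    have "min ((cmod (a - c))^2) ((cmod (a - e))^2) = (1-t) * min ((cmod (a - c))^2) ((cmod (a - e))^2) + t * min ((cmod (a - c))^2) ((cmod (a - e))^2)"
      by (simp add: algebra_simps)
    also have "\<dots> \<le> (1-t) * (cmod (a - c))^2 + t * (cmod (a - e))^2"
      using t by (intro add_mono mult_left_mono) auto
    finally show ?thesis .
  qed
  with S have "(cmod (a - c))^2 < h^2 + 2*h \<or> (cmod (a - e))^2 < h^2 + 2*h"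
    by (auto simp: min_def split: if_splits)
  then show ?thesis
    using real_less_rsqrt by blast
qed

lemma hausdist_le:
  fixes S T :: "complex set"
  assumes "x \<in> S" "bounded S" "bounded T" "T \<noteq> {}"
  shows "setdist {x} T \<le> hausdist S T"
proof -
  obtain t where t: "t \<in> T" using assms(4) by auto
  obtain B where B: "\<And>y. y \<in> S \<Longrightarrow> norm y \<le> B" using assms(2) bounded_iff by blast
  have "bdd_above ((\<lambda>x. setdist {x} T) ` S)"
  proof (rule bdd_aboveI2)
    fix y assume "y \<in> S"
    have "setdist {y} T \<le> dist y t" using t by (simp add: setdist_le_dist)
    also have "\<dots> \<le> norm y + norm t" by (simp add: dist_norm norm_triangle_ineq4)
    also have "\<dots> \<le> B + norm t" using B \<open>y \<in> S\<close> by simp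
    finally show "setdist {y} T \<le> B + norm t" .
  qed
  then have "setdist {x} T \<le> (SUP x\<in>S. setdist {x} T)"
    by (rule cSUP_upper[OF assms(1)])
  then show ?thesis unfolding hausdist_def by simp
qed

lemma hausdist_sym: "hausdist S T = hausdist T S"
  unfolding hausdist_def by (simp add: max.commute)

lemma hausdist_seg_le:
  fixes a b c e :: complex
  shows "hausdist (closed_segment a b) (closed_segment c e) \<le> max (cmod (a - c)) (cmod (b - e))"
proof -
  have one: "(SUP x\<in>closed_segment p q. setdist {x} (closed_segment r s)) \<le> max (cmod (p - r)) (cmod (q - s))"
    for p q r s :: complex
  proof (rule cSUP_least)
    show "closed_segment p q \<noteq> {}" by simp
    fix x assume "x \<in> closed_segment p q"
    then obtain u where u: "0 \<le> u" "u \<le> 1" "x = (1 - u) *\<^sub>R p + u *\<^sub>R q" by (auto simp: in_segment)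
    define y where "y = (1 - u) *\<^sub>R r + u *\<^sub>R s"
    have y: "y \<in> closed_segment r s" unfolding y_def using u by (auto simp: in_segment)
    have "setdist {x} (closed_segment r s) \<le> dist x y" using y by (simp add: setdist_le_dist)
    also have "dist x y = norm ((1 - u) *\<^sub>R (p - r) + u *\<^sub>R (q - s))"
      unfolding u y_def dist_norm by (simp add: algebra_simps)
    also have "\<dots> \<le> (1-u) * cmod (p - r) + u * cmod (q - s)"
      using u by (metis (no_types, lifting) abs_of_nonneg diff_ge_0_iff_ge norm_scaleR norm_triangle_ineq order_trans order.refl)
    also have "\<dots> \<le> (1-u) * max (cmod (p - r)) (cmod (q - s)) + u * max (cmod (p - r)) (cmod (q - s))"
      using u by (intro add_mono mult_left_mono) auto
    also have "\<dots> = max (cmod (p - r)) (cmod (q - s))" by (simp add: algebra_simps)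
    finally show "setdist {x} (closed_segment r s) \<le> max (cmod (p - r)) (cmod (q - s))" .
  qed
  have A: "(SUP y\<in>closed_segment c e. setdist {y} (closed_segment a b)) \<le> max (cmod (c - a)) (cmod (e - b))"
    by (rule one)
  have B: "(SUP y\<in>closed_segment a b. setdist {y} (closed_segment c e)) \<le> max (cmod (a - c)) (cmod (b - e))"
    by (rule one)
  have C: "max (cmod (c - a)) (cmod (e - b)) = max (cmod (a - c)) (cmod (b - e))"
    by (simp add: norm_minus_commute)
  show ?thesis using A B C unfolding hausdist_def by simp
qed

lemma hausdist_le_cdist:
  "hausdist (geom {a,b}) (geom {c,e}) \<le> cdist {a,b} {c,e}"
proof -
  have 1: "hausdist (geom {a,b}) (geom {c,e}) \<le> max (cmod (a - c)) (cmod (b - e))"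
    unfolding geom_eq by (rule hausdist_seg_le)
  have 2: "hausdist (geom {a,b}) (geom {c,e}) \<le> max (cmod (a - e)) (cmod (b - c))"
    unfolding geom_eq by (subst (2) closed_segment_commute) (rule hausdist_seg_le)
  show ?thesis using 1 2 unfolding cdist_eq pd_def by simp
qed

definition eta :: "real \<Rightarrow> real" where "eta e = min 1 (e^2/100)"

lemma eta_pos: "e > 0 \<Longrightarrow> eta e > 0"
  unfolding eta_def by simp

lemma eta_bound: assumes "e > 0" shows "3 * sqrt ((eta e)^2 + 2 * eta e) < e"
proof -
  have e1: "eta e \<le> 1" "eta e \<le> e^2/100" "eta e > 0" using assms by (auto simp: eta_def)
  have "(eta e)^2 \<le> eta e" using e1 by (simp add: power2_eq_square mult_le_cancel_right1)
  hence "(eta e)^2 + 2 * eta e \<le> 3 * (e^2/100)" using e1 by linarith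
  also have "\<dots> < (e/3)^2" using assms by (simp add: power2_eq_square)
  finally have "sqrt ((eta e)^2 + 2 * eta e) < e/3"
    using assms by (intro real_less_lsqrt) auto
  then show ?thesis by simp
qed

lemma cdist_le_hausdist:
  fixes a b c e :: complex
  assumes "cmod a = 1" "cmod b = 1" "cmod c = 1" "cmod e = 1" "f > 0"
    and "hausdist (geom {a,b}) (geom {c,e}) < eta f"
  shows "cdist {a,b} {c,e} < f"
proof -
  define h where "h = eta f"
  define r where "r = sqrt (h^2 + 2*h)"
  have r3: "3 * r < f" unfolding r_def h_def using eta_bound[OF assms(5)] .
  have H: "hausdist (closed_segment a b) (closed_segment c e) < h"
    using assms(6) unfolding h_def geom_eq .
  have near: "\<exists>y\<in>{p,q}. cmod (x - y) < r"
    if "x \<in> {u,v}" "cmod x = 1" "cmod p = 1" "cmod q = 1" "hausdist (closed_segment u v) (closed_segment p q) < h"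
    for x u v p q :: complex
  proof -
    have "setdist {x} (closed_segment p q) \<le> hausdist (closed_segment u v) (closed_segment p q)"
      using that(1) by (intro hausdist_le) (auto intro: compact_imp_bounded)
    hence "setdist {x} (closed_segment p q) < h" using that(5) by linarith
    then obtain x' y where "x' \<in> {x}" "y \<in> closed_segment p q" "dist x' y < h"
      by (rule setdist_ltE) auto
    then have "cmod (x - p) < r \<or> cmod (x - q) < r"
      unfolding r_def using seg_near_endpoint[of x p q y h] that by (auto simp: dist_norm)
    then show ?thesis by auto
  qed
  have H': "hausdist (closed_segment c e) (closed_segment a b) < h" using H by (simp add: hausdist_sym)
  have na: "cmod (a - c) < r \<or> cmod (a - e) < r" using near[of a a b c e] assms H by auto
  have nb: "cmod (b - c) < r \<or> cmod (b - e) < r" using near[of b a b c e] assms H by auto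
  have nc: "cmod (c - a) < r \<or> cmod (c - b) < r" using near[of c c e a b] assms H' by auto
  have ne: "cmod (e - a) < r \<or> cmod (e - b) < r" using near[of e c e a b] assms H' by auto
  have sym: "cmod (u - v) = cmod (v - u)" for u v :: complex by (rule norm_minus_commute)
  have "pd (a,b) (c,e) < 3 * r"
  proof -
    have r0: "r \<ge> 0" using eta_pos[OF assms(5)] unfolding r_def h_def by simp
    have p1: "pd (a,b) (c,e) \<le> max (cmod (a - c)) (cmod (b - e))" by (rule pd_le1)
    have p2: "pd (a,b) (c,e) \<le> max (cmod (a - e)) (cmod (b - c))" by (rule pd_le2)
    have t1: "cmod (b - e) \<le> cmod (b - c) + cmod (c - a) + cmod (a - e)"
      using tri[of b e c] tri[of c e a] by linarith
    have t2: "cmod (a - e) \<le> cmod (a - c) + cmod (c - b) + cmod (b - e)"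
      using tri[of a e c] tri[of c e b] by linarith
    have m1: "max (cmod (a - c)) (cmod (b - e)) < 3*r" if "cmod (a - c) < 3*r" "cmod (b - e) < 3*r"
      using that by simp
    have m2: "max (cmod (a - e)) (cmod (b - c)) < 3*r" if "cmod (a - e) < 3*r" "cmod (b - c) < 3*r"
      using that by simp
    from na show ?thesis
    proof
      assume ac: "cmod (a - c) < r"
      from nb show ?thesis
      proof
        assume bc: "cmod (b - c) < r"
        from ne show ?thesis
        proof
          assume "cmod (e - a) < r"
          then have "cmod (b - e) < 3*r" using t1 ac bc sym[of a c] sym[of a e] sym[of e a] by linarith
          then show ?thesis using m1 ac r0 p1 by linarith
        next
          assume "cmod (e - b) < r"
          then show ?thesis using m1 ac r0 p1 sym[of e b] by linarith
        qed
      next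
        assume "cmod (b - e) < r"
        then show ?thesis using m1 ac r0 p1 by linarith
      qed
    next
      assume ae: "cmod (a - e) < r"
      from nb show ?thesis
      proof
        assume "cmod (b - c) < r"
        then show ?thesis using m2 ae r0 p2 by linarith
      next
        assume be: "cmod (b - e) < r"
        from nc show ?thesis
        proof
          assume "cmod (c - a) < r"
          then show ?thesis using m1 be r0 p1 sym[of c a] by linarith
        next
          assume "cmod (c - b) < r"
          then show ?thesis using m2 ae r0 p2 sym[of c b] by linarith
        qed
      qed
    qed
  qed
  then show ?thesis using r3 by (simp add: cdist_eq)
qed



lemma chord_ex: "is_chord l \<Longrightarrow> \<exists>a b. cmod a = 1 \<and> cmod b = 1 \<and> l = {a,b}"
  using chordE by metis

lemma sigma_pair: "sigma_img d {a,b} = {a^d, b^d}"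
  unfolding sigma_img_def by simp

lemma cdist_sigma:
  fixes a b c e :: complex
  assumes "cmod a \<le> 1" "cmod b \<le> 1" "cmod c \<le> 1" "cmod e \<le> 1"
  shows "cdist (sigma_img d {a,b}) (sigma_img d {c,e}) \<le> d * cdist {a,b} {c,e}"
proof -
  have P: "cmod (u^d - v^d) \<le> d * cmod (u - v)" if "cmod u \<le> 1" "cmod v \<le> 1" for u v :: complex
    using norm_power_diff[OF that] by simp
  have 1: "pd (a^d, b^d) (c^d, e^d) \<le> d * max (cmod (a - c)) (cmod (b - e))"
  proof -
    have "pd (a^d, b^d) (c^d, e^d) \<le> max (cmod (a^d - c^d)) (cmod (b^d - e^d))" by (rule pd_le1)
    also have "\<dots> \<le> max (d * cmod (a - c)) (d * cmod (b - e))"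
      using P[of a c] P[of b e] assms by (intro max.mono) auto
    also have "\<dots> = d * max (cmod (a - c)) (cmod (b - e))"
      by (simp add: max_mult_distrib_left)
    finally show ?thesis .
  qed
  have 2: "pd (a^d, b^d) (c^d, e^d) \<le> d * max (cmod (a - e)) (cmod (b - c))"
  proof -
    have "pd (a^d, b^d) (c^d, e^d) \<le> max (cmod (a^d - e^d)) (cmod (b^d - c^d))" by (rule pd_le2)
    also have "\<dots> \<le> max (d * cmod (a - e)) (d * cmod (b - c))"
      using P[of a e] P[of b c] assms by (intro max.mono) auto
    also have "\<dots> = d * max (cmod (a - e)) (cmod (b - c))"
      by (simp add: max_mult_distrib_left)
    finally show ?thesis .
  qed
  have "pd (a^d, b^d) (c^d, e^d) \<le> d * pd (a,b) (c,e)"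
    using 1 2 pd_cases[of a b c e] by auto
  then show ?thesis by (simp add: sigma_pair cdist_eq)
qed

lemma finite_sigma_fibre:
  assumes "d > 0" "finite m"
  shows "finite {l. sigma_img d l = m}"
proof -
  have fin: "finite (\<Union>u\<in>m. {z::complex. z ^ d = u})"
    using assms by (intro finite_UN_I) auto
  have "{l. sigma_img d l = m} \<subseteq> Pow (\<Union>u\<in>m. {z::complex. z ^ d = u})"
    unfolding sigma_img_def by auto
  then show ?thesis using fin by (meson finite_Pow_iff finite_subset)
qed

lemma local_inj:
  assumes "d > 0"
  obtains \<delta> :: real where "\<delta> > 0"
    "\<And>z w. cmod z = 1 \<Longrightarrow> cmod w = 1 \<Longrightarrow> z^d = w^d \<Longrightarrow> z \<noteq> w \<Longrightarrow> cmod (z - w) \<ge> \<delta>"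
proof -
  define R where "R = {u::complex. u^d = 1} - {1}"
  have finR: "finite R" unfolding R_def using assms by (simp add: finite_roots_unity)
  define \<delta> where "\<delta> = (if R = {} then 1 else Min ((\<lambda>u. cmod (u - 1)) ` R))"
  have pos: "\<delta> > 0"
  proof (cases "R = {}")
    case True then show ?thesis by (simp add: \<delta>_def)
  next
    case False
    have "Min ((\<lambda>u. cmod (u - 1)) ` R) \<in> (\<lambda>u. cmod (u - 1)) ` R"
      using False finR by (intro Min_in) auto
    then obtain u where "u \<in> R" "Min ((\<lambda>u. cmod (u - 1)) ` R) = cmod (u - 1)" by auto
    then show ?thesis using False by (auto simp: \<delta>_def R_def)
  qed
  have bound: "cmod (z - w) \<ge> \<delta>" if "cmod z = 1" "cmod w = 1" "z^d = w^d" "z \<noteq> w" for z w :: complex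
  proof -
    have w0: "w \<noteq> 0" using that(2) by auto
    have "(z/w)^d = 1" using that(3) w0 by (simp add: power_divide)
    moreover have "z/w \<noteq> 1" using that(4) w0 by simp
    ultimately have inR: "z/w \<in> R" unfolding R_def by simp
    have "cmod (z - w) = cmod (w * (z/w - 1))" using w0 by (simp add: algebra_simps)
    also have "\<dots> = cmod (z/w - 1)" using that(2) by (simp add: norm_mult)
    finally have eq: "cmod (z - w) = cmod (z/w - 1)" .
    have "Min ((\<lambda>u. cmod (u - 1)) ` R) \<le> cmod (z/w - 1)"
      using finR inR by (intro Min_le) auto
    then show ?thesis using inR eq by (auto simp: \<delta>_def)
  qed
  show ?thesis using pos bound that by blast
qed

lemma circle_seq_conv:
  fixes a b :: "nat \<Rightarrow> complex"
  assumes "\<And>n. cmod (a n) = 1" "\<And>n. cmod (b n) = 1"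
  obtains r a0 b0 where "strict_mono r" "cmod a0 = 1" "cmod b0 = 1"
    "(a \<circ> r) \<longlonglongrightarrow> a0" "(b \<circ> r) \<longlonglongrightarrow> b0"
proof -
  have "compact (sphere (0::complex) 1 \<times> sphere (0::complex) 1)"
    by (intro compact_Times compact_sphere)
  hence sc: "seq_compact (sphere (0::complex) 1 \<times> sphere (0::complex) 1)"
    by (rule compact_imp_seq_compact)
  have "\<forall>n. (a n, b n) \<in> sphere 0 1 \<times> sphere 0 1" using assms by auto
  then obtain p r where p: "p \<in> sphere 0 1 \<times> sphere 0 1" "strict_mono r"
    "((\<lambda>n. (a n, b n)) \<circ> r) \<longlonglongrightarrow> p"
    using seq_compactE[OF sc] by metis
  have "(\<lambda>n. fst ((a (r n), b (r n)))) \<longlonglongrightarrow> fst p"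
    using p(3) by (intro tendsto_fst) (simp add: o_def)
  moreover have "(\<lambda>n. snd ((a (r n), b (r n)))) \<longlonglongrightarrow> snd p"
    using p(3) by (intro tendsto_snd) (simp add: o_def)
  ultimately show ?thesis using p that[of r "fst p" "snd p"] by (auto simp: o_def)
qed

lemma pd_conv:
  assumes "a \<longlonglongrightarrow> a0" "b \<longlonglongrightarrow> b0"
  shows "(\<lambda>n. pd (a n, b n) (a0, b0)) \<longlonglongrightarrow> 0"
proof -
  have "(\<lambda>n. max (cmod (a n - a0)) (cmod (b n - b0))) \<longlonglongrightarrow> max 0 0"
    using assms by (intro tendsto_max tendsto_norm_zero) (auto simp: LIM_zero_iff)
  then have m: "(\<lambda>n. max (cmod (a n - a0)) (cmod (b n - b0))) \<longlonglongrightarrow> 0" by simp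
  show ?thesis
    by (rule Lim_null_comparison[OF _ m]) (auto simp: pd_nonneg pd_le1)
qed

lemma cdist_conv:
  assumes "a \<longlonglongrightarrow> a0" "b \<longlonglongrightarrow> b0"
  shows "(\<lambda>n. cdist {a n, b n} {a0, b0}) \<longlonglongrightarrow> 0"
  using pd_conv[OF assms] by (simp add: cdist_eq)

lemma chord_seq_conv:
  fixes l :: "nat \<Rightarrow> complex set"
  assumes "\<And>n. is_chord (l n)"
  obtains r a0 b0 where "strict_mono r" "cmod a0 = 1" "cmod b0 = 1"
    "(\<lambda>n. cdist (l (r n)) {a0, b0}) \<longlonglongrightarrow> 0"
proof -
  have "\<exists>a b. cmod a = 1 \<and> cmod b = 1 \<and> l n = {a,b}" for n
    using chord_ex[OF assms[of n]] by metis
  then obtain a b :: "nat \<Rightarrow> complex" where ab: "\<And>n. cmod (a n) = 1" "\<And>n. cmod (b n) = 1" "\<And>n. l n = {a n, b n}"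
    by metis
  obtain r a0 b0 where "strict_mono r" "cmod a0 = 1" "cmod b0 = 1"
    "(a \<circ> r) \<longlonglongrightarrow> a0" "(b \<circ> r) \<longlonglongrightarrow> b0"
    using circle_seq_conv[of a b] ab by metis
  moreover have "(\<lambda>n. cdist {(a \<circ> r) n, (b \<circ> r) n} {a0, b0}) \<longlonglongrightarrow> 0"
    by (rule cdist_conv) fact+
  ultimately show ?thesis using that[of r a0 b0] ab(3) by (auto simp: o_def)
qed

lemma align_rep:
  assumes "l = {u,v}"
  obtains a' b' where "l = {a',b'}" "max (cmod (a' - a)) (cmod (b' - b)) = cdist l {a,b}"
proof -
  have "cdist l {a,b} = pd (u,v) (a,b)" using assms by (simp add: cdist_eq)
  then show ?thesis using that[of u v] that[of v u] assms unfolding pd_def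
    by (auto simp: min_def insert_commute split: if_splits)
qed

lemma align_seq:
  fixes l :: "nat \<Rightarrow> complex set"
  assumes "\<And>n. is_chord (l n)" "(\<lambda>n. cdist (l n) {a,b}) \<longlonglongrightarrow> 0"
  obtains an bn where "\<And>n. l n = {an n, bn n}" "\<And>n. cmod (an n) = 1" "\<And>n. cmod (bn n) = 1"
    "an \<longlonglongrightarrow> a" "bn \<longlonglongrightarrow> b"
proof -
  have "\<exists>a' b'. l n = {a',b'} \<and> cmod a' = 1 \<and> cmod b' = 1 \<and> max (cmod (a' - a)) (cmod (b' - b)) = cdist (l n) {a,b}" for n
  proof -
    obtain u v where uv: "cmod u = 1" "cmod v = 1" "l n = {u,v}" using chord_ex[OF assms(1)[of n]] by metis
    obtain a' b' where "l n = {a',b'}" "max (cmod (a' - a)) (cmod (b' - b)) = cdist (l n) {a,b}"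
      using align_rep[OF uv(3)] by metis
    moreover then have "cmod a' = 1 \<and> cmod b' = 1" using uv by (auto simp: doubleton_eq_iff)
    ultimately show ?thesis by blast
  qed
  then obtain an bn where ab: "\<And>n. l n = {an n, bn n}" "\<And>n. cmod (an n) = 1" "\<And>n. cmod (bn n) = 1"
    "\<And>n. max (cmod (an n - a)) (cmod (bn n - b)) = cdist (l n) {a,b}" by metis
  have "(\<lambda>n. an n - a) \<longlonglongrightarrow> 0"
    by (rule Lim_null_comparison[OF _ assms(2)]) (auto simp: ab(4)[symmetric])
  hence A: "an \<longlonglongrightarrow> a" by (simp add: LIM_zero_iff)
  have "(\<lambda>n. bn n - b) \<longlonglongrightarrow> 0"
    by (rule Lim_null_comparison[OF _ assms(2)]) (auto simp: ab(4)[symmetric])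
  hence B: "bn \<longlonglongrightarrow> b" by (simp add: LIM_zero_iff)
  show ?thesis using that ab A B by blast
qed

locale sizep =
  fixes Q :: "complex set set \<Rightarrow> bool"
  assumes Q_mono: "Q S \<Longrightarrow> S \<subseteq> T \<Longrightarrow> Q T"
    and Q_Un: "Q (A \<union> B) \<Longrightarrow> Q A \<or> Q B"
    and Q_empty: "\<not> Q {}"
    and Q_img: "Q S \<Longrightarrow> (\<And>y. finite {x\<in>S. f x = y}) \<Longrightarrow> Q (f ` S)"
    and Q_img_rev: "Q (f ` S) \<Longrightarrow> Q S"
    and Q_unc: "uncountable S \<Longrightarrow> Q S"
begin

lemma Q_ne: "Q S \<Longrightarrow> S \<noteq> {}"
  using Q_empty by auto

lemma Q_Union: "finite F \<Longrightarrow> Q (\<Union>F) \<Longrightarrow> \<exists>A\<in>F. Q A"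
proof (induction F rule: finite_induct)
  case empty then show ?case using Q_empty by simp
next
  case (insert x F) then show ?case using Q_Un[of x "\<Union>F"] by auto
qed

lemma condensation:
  assumes "\<And>l. l \<in> S \<Longrightarrow> is_chord l" "Q S"
  obtains a0 b0 where "cmod a0 = 1" "cmod b0 = 1" "\<And>e. e > 0 \<Longrightarrow> Q {l\<in>S. cdist l {a0,b0} < e}"
proof (rule ccontr)
  assume neg: "\<not> thesis"
  have "\<forall>p\<in>sphere (0::complex) 1 \<times> sphere (0::complex) 1. \<exists>e>0. \<not> Q {l\<in>S. cdist l {fst p, snd p} < e}"
    using neg that by force
  then obtain ee where ee: "\<And>p. p \<in> sphere (0::complex) 1 \<times> sphere 0 1 \<Longrightarrow> ee p > 0 \<and> \<not> Q {l\<in>S. cdist l {fst p, snd p} < ee p}"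
    by metis
  have K: "compact (sphere (0::complex) 1 \<times> sphere (0::complex) 1)"
    by (intro compact_Times compact_sphere)
  have cov: "sphere (0::complex) 1 \<times> sphere (0::complex) 1 \<subseteq> (\<Union>p\<in>sphere 0 1 \<times> sphere 0 1. ball p (ee p))"
    using ee by force
  obtain C where C: "C \<subseteq> sphere (0::complex) 1 \<times> sphere 0 1" "finite C"
    "sphere (0::complex) 1 \<times> sphere (0::complex) 1 \<subseteq> (\<Union>p\<in>C. ball p (ee p))"
    using compactE_image[OF K _ cov] by auto
  have "S \<subseteq> \<Union>((\<lambda>p. {l\<in>S. cdist l {fst p, snd p} < ee p}) ` C)"
  proof
    fix l assume lS: "l \<in> S"
    obtain a b where ab: "cmod a = 1" "cmod b = 1" "l = {a,b}" using chord_ex[OF assms(1)[OF lS]] by metis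
    then have "(a,b) \<in> sphere 0 1 \<times> sphere 0 1" by simp
    then have "(a,b) \<in> (\<Union>p\<in>C. ball p (ee p))" using C(3) by blast
    then obtain p where p0: "p \<in> C" "(a,b) \<in> ball p (ee p)" by blast
    then have p: "p \<in> C" "dist (a,b) p < ee p" by (auto simp: dist_commute)
    have "cmod (a - fst p) \<le> dist (a,b) p" using dist_fst_le[of "(a,b)" p] by (simp add: dist_norm)
    moreover have "cmod (b - snd p) \<le> dist (a,b) p" using dist_snd_le[of "(a,b)" p] by (simp add: dist_norm)
    ultimately have "cdist l {fst p, snd p} < ee p"
      using p pd_le1[of a b "fst p" "snd p"] ab(3) by (simp add: cdist_eq)
    then show "l \<in> \<Union>((\<lambda>p. {l\<in>S. cdist l {fst p, snd p} < ee p}) ` C)" using lS p by auto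
  qed
  then have "Q (\<Union>((\<lambda>p. {l\<in>S. cdist l {fst p, snd p} < ee p}) ` C))"
    using assms(2) Q_mono by blast
  then obtain p where "p \<in> C" "Q {l\<in>S. cdist l {fst p, snd p} < ee p}"
    using Q_Union[of "(\<lambda>p. {l\<in>S. cdist l {fst p, snd p} < ee p}) ` C"] C(2) by auto
  then show False using ee C(1) by blast
qed

end



lemma circle_line_id:
  fixes p q :: complex
  assumes "cmod p = 1" "cmod q = 1"
  shows "(cmod ((1 - s) *\<^sub>R p + s *\<^sub>R q))^2 = 1 + s*(s-1) * (cmod (q - p))^2"
proof -
  have "(1-s) * (cmod (0 - p))^2 + s * (cmod (0 - q))^2
       = (cmod (0 - ((1-s) *\<^sub>R p + s *\<^sub>R q)))^2 + s*(1-s) * (cmod (p - q))^2"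
    by (rule variance_id)
  then show ?thesis using assms by (simp add: norm_minus_commute algebra_simps)
qed

lemma seg_cball: "z \<in> closed_segment a b \<Longrightarrow> cmod a \<le> 1 \<Longrightarrow> cmod b \<le> 1 \<Longrightarrow> cmod z \<le> 1"
  using seg_point_bound[of z a b 0] by auto

lemma seg_circle:
  fixes a b z :: complex
  assumes "cmod a = 1" "cmod b = 1" "z \<in> closed_segment a b" "cmod z = 1"
  shows "z = a \<or> z = b"
proof -
  obtain u where u: "0 \<le> u" "u \<le> 1" "z = (1 - u) *\<^sub>R a + u *\<^sub>R b" using assms(3) by (auto simp: in_segment)
  have "1 = 1 + u*(u-1) * (cmod (b - a))^2" using circle_line_id[OF assms(1,2), of u] u(3) assms(4) by simp
  then have "u = 0 \<or> u = 1 \<or> b = a" by simp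
  then show ?thesis using u(3) by auto
qed

definition phi :: "complex \<Rightarrow> complex \<Rightarrow> complex \<Rightarrow> real" where
  "phi p q z = Im ((z - p) * cnj (q - p))"

lemma phi_affine: "phi p q ((1 - s) *\<^sub>R x + s *\<^sub>R y) = (1 - s) * phi p q x + s * phi p q y"
proof -
  have "(1 - s) *\<^sub>R x + s *\<^sub>R y - p = (1 - s) *\<^sub>R (x - p) + s *\<^sub>R (y - p)"
    by (simp add: algebra_simps)
  then show ?thesis unfolding phi_def by (simp add: scaleR_conv_of_real algebra_simps)
qed

lemma phi_cont:
  assumes "pn \<longlonglongrightarrow> p" "qn \<longlonglongrightarrow> q" "zn \<longlonglongrightarrow> z"
  shows "(\<lambda>n. phi (pn n) (qn n) (zn n)) \<longlonglongrightarrow> phi p q z"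
  unfolding phi_def by (intro tendsto_intros assms)

lemma phi_zero_line:
  fixes p q z :: complex
  assumes "p \<noteq> q" "phi p q z = 0"
  shows "\<exists>s. z = (1 - s) *\<^sub>R p + s *\<^sub>R q"
proof -
  define w where "w = q - p"
  have w0: "w \<noteq> 0" using assms(1) by (simp add: w_def)
  define R where "R = Re ((z - p) * cnj w)"
  have e1: "(z - p) * cnj w = of_real R"
    using assms(2) unfolding phi_def R_def w_def by (simp add: complex_eq_iff)
  have "(z - p) * (cnj w * w) = of_real R * w" using e1 by (metis mult.assoc mult.commute)
  moreover have "cnj w * w = of_real ((cmod w)^2)" by (metis complex_norm_square mult.commute)
  ultimately have "(z - p) * of_real ((cmod w)^2) = of_real R * w" by simp
  moreover have "(cmod w)^2 \<noteq> 0" using w0 by simp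
  ultimately have "z - p = of_real (R / (cmod w)^2) * w"
    by (simp add: field_simps)
  then have "z = p + of_real (R / (cmod w)^2) * (q - p)" unfolding w_def by (simp add: algebra_simps)
  moreover have "p + of_real c * (q - p) = (1 - c) *\<^sub>R p + c *\<^sub>R q" for c
    unfolding scaleR_conv_of_real by (simp add: algebra_simps)
  ultimately show ?thesis by metis
qed

lemma line_disk_seg:
  fixes p q z :: complex
  assumes "cmod p = 1" "cmod q = 1" "p \<noteq> q" "phi p q z = 0" "cmod z \<le> 1"
  shows "z \<in> closed_segment p q"
proof -
  obtain s where s: "z = (1 - s) *\<^sub>R p + s *\<^sub>R q" using phi_zero_line[OF assms(3,4)] by blast
  have "(cmod z)^2 = 1 + s*(s-1) * (cmod (q - p))^2" using circle_line_id[OF assms(1,2)] s by simp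
  moreover have "(cmod z)^2 \<le> 1" using assms(5) by (simp add: power_le_one)
  moreover have "(cmod (q - p))^2 > 0" using assms(3) by simp
  ultimately have "s*(s-1) * (cmod (q - p))^2 \<le> 0" by linarith
  then have "s*(s-1) \<le> 0" using \<open>(cmod (q - p))^2 > 0\<close> by (simp add: mult_le_0_iff)
  then have "0 \<le> s \<and> s \<le> 1"
    by (auto simp: mult_le_0_iff)
  then show ?thesis using s by (auto simp: in_segment)
qed

lemma phi_circle:
  fixes p q a :: complex
  assumes "cmod p = 1" "cmod q = 1" "p \<noteq> q" "phi p q a = 0" "cmod a = 1"
  shows "a = p \<or> a = q"
proof -
  obtain s where s: "a = (1 - s) *\<^sub>R p + s *\<^sub>R q" using phi_zero_line[OF assms(3,4)] by blast
  have "(cmod a)^2 = 1 + s*(s-1) * (cmod (q - p))^2" using circle_line_id[OF assms(1,2)] s by simp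
  then have "s*(s-1) * (cmod (q - p))^2 = 0" using assms(5) by simp
  then have "s = 0 \<or> s = 1" using assms(3) by simp
  then show ?thesis using s by auto
qed

lemma phi_seg_zero:
  assumes "m \<in> closed_segment p q"
  shows "phi p q m = 0"
proof -
  obtain s where s: "m = (1 - s) *\<^sub>R p + s *\<^sub>R q" using assms by (auto simp: in_segment)
  have "phi p q m = (1-s) * phi p q p + s * phi p q q" using phi_affine s by simp
  moreover have "phi p q p = 0" "phi p q q = 0" unfolding phi_def
    by (simp_all add: complex_mult_cnj algebra_simps)
  ultimately show ?thesis by simp
qed

lemma static_sign:
  fixes a b p q m :: complex
  assumes "cmod a = 1" "cmod b = 1" "cmod p = 1" "cmod q = 1"
    "m \<in> closed_segment a b" "m \<in> closed_segment p q" "cmod m < 1" "{a,b} \<noteq> {p,q}"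
  shows "phi p q a * phi p q b < 0" "p \<noteq> q"
    "m = (1 - phi p q a / (phi p q a - phi p q b)) *\<^sub>R a + (phi p q a / (phi p q a - phi p q b)) *\<^sub>R b"
proof -
  show pq: "p \<noteq> q" using assms(3,6,7) by auto
  obtain t where t: "0 \<le> t" "t \<le> 1" "m = (1 - t) *\<^sub>R a + t *\<^sub>R b" using assms(5) by (auto simp: in_segment)
  have t0: "t \<noteq> 0" using t assms(1,7) by auto
  have t1: "t \<noteq> 1" using t assms(2,7) by auto
  have ab: "a \<noteq> b" using t assms(1,7) by auto
  have z: "(1-t) * phi p q a + t * phi p q b = 0"
    using phi_seg_zero[OF assms(6)] phi_affine[of p q t a b] t(3) by simp
  have nz: "phi p q a \<noteq> 0"
  proof
    assume A: "phi p q a = 0"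
    then have B: "phi p q b = 0" using z t t0 by simp
    have "a = p \<or> a = q" using phi_circle[OF assms(3,4) pq A assms(1)] .
    moreover have "b = p \<or> b = q" using phi_circle[OF assms(3,4) pq B assms(2)] .
    ultimately show False using ab assms(8) by auto
  qed
  have "t * phi p q b = -(1-t) * phi p q a" using z by linarith
  then have "phi p q a * (t * phi p q b) = phi p q a * (-(1-t) * phi p q a)" by simp
  then have E: "t * (phi p q a * phi p q b) = -((1-t) * (phi p q a)^2)"
    by (simp add: power2_eq_square algebra_simps)
  have "(1-t) * (phi p q a)^2 > 0" using nz t t1 by simp
  then have "t * (phi p q a * phi p q b) < 0" using E by linarith
  then show "phi p q a * phi p q b < 0" using t(1) by (simp add: mult_less_0_iff)
  have "phi p q a - phi p q b = phi p q a / t"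
    using z t0 by (simp add: field_simps)
  then have "phi p q a / (phi p q a - phi p q b) = t" using nz t0 by simp
  then show "m = (1 - phi p q a / (phi p q a - phi p q b)) *\<^sub>R a + (phi p q a / (phi p q a - phi p q b)) *\<^sub>R b"
    using t(3) by simp
qed

lemma cross_persist:
  fixes a b p q m :: complex and an bn pn qn :: "nat \<Rightarrow> complex"
  assumes "cmod a = 1" "cmod b = 1" "cmod p = 1" "cmod q = 1"
    "m \<in> closed_segment a b" "m \<in> closed_segment p q" "cmod m < 1" "{a,b} \<noteq> {p,q}"
    "an \<longlonglongrightarrow> a" "bn \<longlonglongrightarrow> b" "pn \<longlonglongrightarrow> p" "qn \<longlonglongrightarrow> q"
    "\<And>n. cmod (pn n) = 1" "\<And>n. cmod (qn n) = 1"
  shows "eventually (\<lambda>n. closed_segment (an n) (bn n) \<inter> closed_segment (pn n) (qn n) \<inter> ball 0 1 \<noteq> {}) sequentially"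
proof -
  define A where "A = phi p q a"
  define B where "B = phi p q b"
  define fA where "fA n = phi (pn n) (qn n) (an n)" for n
  define fB where "fB n = phi (pn n) (qn n) (bn n)" for n
  have AB: "A * B < 0" unfolding A_def B_def using static_sign[OF assms(1-8)] by simp
  have mEq: "m = (1 - A / (A - B)) *\<^sub>R a + (A / (A - B)) *\<^sub>R b"
    unfolding A_def B_def using static_sign[OF assms(1-8)] by simp
  have AB0: "A - B \<noteq> 0" using AB by auto
  have fA: "fA \<longlonglongrightarrow> A" unfolding fA_def A_def by (intro phi_cont assms)
  have fB: "fB \<longlonglongrightarrow> B" unfolding fB_def B_def by (intro phi_cont assms)
  have e1: "eventually (\<lambda>n. fA n * fB n < 0) sequentially"
    using order_tendstoD(2)[OF tendsto_mult[OF fA fB] AB] .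
  define sn where "sn n = fA n / (fA n - fB n)" for n
  define zn where "zn n = (1 - sn n) *\<^sub>R an n + sn n *\<^sub>R bn n" for n
  have "sn \<longlonglongrightarrow> A / (A - B)" unfolding sn_def by (intro tendsto_intros fA fB AB0)
  then have "zn \<longlonglongrightarrow> (1 - A / (A - B)) *\<^sub>R a + (A / (A - B)) *\<^sub>R b"
    unfolding zn_def by (intro tendsto_intros assms)
  then have "zn \<longlonglongrightarrow> m" using mEq by simp
  then have "(\<lambda>n. cmod (zn n)) \<longlonglongrightarrow> cmod m" by (rule tendsto_norm)
  then have e2: "eventually (\<lambda>n. cmod (zn n) < 1) sequentially"
    using order_tendstoD(2) assms(7) by blast
  show ?thesis
  proof (rule eventually_mono[OF eventually_conj[OF e1 e2]])
    fix n assume H: "fA n * fB n < 0 \<and> cmod (zn n) < 1"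
    have d0: "fA n - fB n \<noteq> 0" using H by auto
    have s01: "0 \<le> sn n \<and> sn n \<le> 1"
    proof (cases "fA n > 0")
      case True
      then have "fB n < 0" using H by (simp add: mult_less_0_iff)
      then show ?thesis using True unfolding sn_def by (simp add: divide_le_eq_1)
    next
      case False
      then have "fA n < 0" "fB n > 0" using H by (auto simp: mult_less_0_iff)
      then show ?thesis unfolding sn_def by (simp add: divide_le_eq_1 divide_nonneg_nonpos divide_nonpos_neg)
    qed
    have z1: "zn n \<in> closed_segment (an n) (bn n)" using s01 unfolding zn_def by (auto simp: in_segment)
    have "phi (pn n) (qn n) (zn n) = (1 - sn n) * fA n + sn n * fB n"
      unfolding zn_def fA_def fB_def by (rule phi_affine)
    also have "\<dots> = 0" unfolding sn_def using d0 by (simp add: field_simps)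
    finally have ph: "phi (pn n) (qn n) (zn n) = 0" .
    have pq: "pn n \<noteq> qn n"
    proof
      assume "pn n = qn n"
      then have "fA n = 0" unfolding fA_def phi_def by simp
      then show False using H by simp
    qed
    have z2: "zn n \<in> closed_segment (pn n) (qn n)"
      using line_disk_seg[OF assms(13,14) pq ph] H by simp
    show "closed_segment (an n) (bn n) \<inter> closed_segment (pn n) (qn n) \<inter> ball 0 1 \<noteq> {}"
      using z1 z2 H by auto
  qed
qed



lemma lam_chord: "lamination L \<Longrightarrow> l \<in> L \<Longrightarrow> is_chord l"
  unfolding lamination_def by blast

lemma lam_deg: "lamination L \<Longrightarrow> cmod a = 1 \<Longrightarrow> {a} \<in> L"
  unfolding lamination_def unit_circle_def by auto

lemma lam_closed: "lamination L \<Longrightarrow> closed (\<Union>l\<in>L. geom l)"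
  unfolding lamination_def by blast

lemma lam_nocross: "lamination L \<Longrightarrow> l1 \<in> L \<Longrightarrow> l2 \<in> L \<Longrightarrow> \<not> cross l1 l2"
  unfolding lamination_def by blast

lemma cdist_pos: "{a,b} \<noteq> {c,e} \<Longrightarrow> cdist {a,b} {c,e} > 0"
  using cdist_zero cdist_nonneg[of "{a,b}" "{c,e}"] by force

lemma midpoint_in: 
  fixes a b :: complex
  assumes "cmod a = 1" "cmod b = 1" "a \<noteq> b"
  shows "(1 - 1/2) *\<^sub>R a + (1/2) *\<^sub>R b \<in> closed_segment a b"
        "cmod ((1 - 1/2) *\<^sub>R a + (1/2) *\<^sub>R b) < 1"
proof -
  show "(1 - 1/2) *\<^sub>R a + (1/2) *\<^sub>R b \<in> closed_segment a b"
    by (auto simp: in_segment intro!: exI[of _ "1/2"])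
  have "(cmod ((1 - 1/2) *\<^sub>R a + (1/2) *\<^sub>R b))^2 = 1 + (1/2)*(1/2-1) * (cmod (b - a))^2"
    by (rule circle_line_id[OF assms(1,2)])
  moreover have "(cmod (b - a))^2 > 0" using assms(3) by simp
  ultimately have "(cmod ((1 - 1/2) *\<^sub>R a + (1/2) *\<^sub>R b))^2 < 1" by simp
  then show "cmod ((1 - 1/2) *\<^sub>R a + (1/2) *\<^sub>R b) < 1"
    by (simp add: power_less_one_iff abs_square_less_1)
qed

lemma limit_leaf:
  fixes l :: "nat \<Rightarrow> complex set"
  assumes L: "lamination L" and ln: "\<And>n. l n \<in> L" and conv: "(\<lambda>n. cdist (l n) {a,b}) \<longlonglongrightarrow> 0"
    and ab: "cmod a = 1" "cmod b = 1"
  shows "{a,b} \<in> L"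
proof (cases "a = b")
  case True then show ?thesis using lam_deg[OF L ab(1)] by simp
next
  case False
  obtain an bn where an: "\<And>n. l n = {an n, bn n}" "\<And>n. cmod (an n) = 1" "\<And>n. cmod (bn n) = 1"
    "an \<longlonglongrightarrow> a" "bn \<longlonglongrightarrow> b"
    using align_seq[of l a b] lam_chord[OF L ln] conv by metis
  define m where "m = (1 - 1/2) *\<^sub>R a + (1/2) *\<^sub>R b"
  have m: "m \<in> closed_segment a b" "cmod m < 1" unfolding m_def using midpoint_in[OF ab False] by auto
  define mn where "mn n = (1 - 1/2) *\<^sub>R an n + (1/2) *\<^sub>R bn n" for n
  have "mn \<longlonglongrightarrow> m" unfolding mn_def m_def by (intro tendsto_intros an)
  moreover have "mn n \<in> (\<Union>l\<in>L. geom l)" for n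
  proof -
    have "mn n \<in> closed_segment (an n) (bn n)" unfolding mn_def in_segment
      by (rule exI[of _ "1/2"]) simp
    then have "mn n \<in> geom (l n)" using an(1)[of n] by (simp add: geom_eq)
    then show ?thesis using ln[of n] by blast
  qed
  ultimately have "m \<in> (\<Union>l\<in>L. geom l)" using closed_sequentially[OF lam_closed[OF L]] by blast
  then obtain l' where l': "l' \<in> L" "m \<in> geom l'" by auto
  obtain p q where pq: "cmod p = 1" "cmod q = 1" "l' = {p,q}" using chord_ex[OF lam_chord[OF L l'(1)]] by metis
  show ?thesis
  proof (cases "{a,b} = {p,q}")
    case True then show ?thesis using l' pq by simp
  next
    case ne: False
    have ev1: "eventually (\<lambda>n. closed_segment (an n) (bn n) \<inter> closed_segment ((\<lambda>_. p) n) ((\<lambda>_. q) n) \<inter> ball 0 1 \<noteq> {}) sequentially"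
      using l'(2) pq by (intro cross_persist[OF ab pq(1,2) m(1) _ m(2) ne an(4,5)]) (auto simp: geom_eq)
    have "cdist {p,q} {a,b} > 0" using cdist_pos ne by (simp add: cdist_sym)
    then have ev2: "eventually (\<lambda>n. cdist (l n) {a,b} < cdist {p,q} {a,b}) sequentially"
      using order_tendstoD(2)[OF conv] by blast
    have "eventually (\<lambda>n. False) sequentially"
    proof (rule eventually_mono[OF eventually_conj[OF ev1 ev2]])
      fix n assume H: "closed_segment (an n) (bn n) \<inter> closed_segment ((\<lambda>_. p) n) ((\<lambda>_. q) n) \<inter> ball 0 1 \<noteq> {} \<and>
          cdist (l n) {a,b} < cdist {p,q} {a,b}"
      then have "l n \<noteq> l'" using pq by auto
      then have "cross (l n) l'" using H pq an(1)[of n] unfolding cross_def by (simp add: geom_eq)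
      then show False using lam_nocross[OF L ln[of n] l'(1)] by simp
    qed
    then show ?thesis by simp
  qed
qed

lemma DE:
  fixes u v w y :: "nat \<Rightarrow> complex"
  assumes d: "d > 0" and conv: "u \<longlonglongrightarrow> u0" "v \<longlonglongrightarrow> v0" "w \<longlonglongrightarrow> w0"
    and unit: "\<And>n. cmod (u n) = 1" "\<And>n. cmod (w n) = 1"
    and eq: "u0 = w0" and ne: "\<And>n. u n \<noteq> w n"
    and sig: "\<And>n. {u n ^ d, v n ^ d} = {w n ^ d, y n ^ d}"
  shows "u0 ^ d = v0 ^ d"
proof -
  obtain \<delta> where \<delta>: "\<delta> > 0" "\<And>z w. cmod z = 1 \<Longrightarrow> cmod w = 1 \<Longrightarrow> z^d = w^d \<Longrightarrow> z \<noteq> w \<Longrightarrow> cmod (z - w) \<ge> \<delta>"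
    using local_inj[OF d] by metis
  have "(\<lambda>n. u n - w n) \<longlonglongrightarrow> u0 - w0" by (intro tendsto_intros conv)
  then have "(\<lambda>n. cmod (u n - w n)) \<longlonglongrightarrow> 0" using eq by (simp add: tendsto_norm_zero)
  then have ev: "eventually (\<lambda>n. cmod (u n - w n) < \<delta>) sequentially"
    using order_tendstoD(2) \<delta>(1) by blast
  have EV: "eventually (\<lambda>n. v n ^ d = w n ^ d) sequentially"
  proof (rule eventually_mono[OF ev])
    fix n assume "cmod (u n - w n) < \<delta>"
    then have "u n ^ d \<noteq> w n ^ d" using \<delta>(2)[OF unit(1)[of n] unit(2)[of n] _ ne[of n]] by force
    then show "v n ^ d = w n ^ d" using sig[of n] by (auto simp: doubleton_eq_iff)
  qed
  have VT: "(\<lambda>n. v n ^ d) \<longlonglongrightarrow> v0 ^ d" by (intro tendsto_intros conv)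
  have "(\<lambda>n. w n ^ d) \<longlonglongrightarrow> v0 ^ d" by (rule Lim_transform_eventually[OF VT EV])
  moreover have "(\<lambda>n. w n ^ d) \<longlonglongrightarrow> w0 ^ d" by (intro tendsto_intros conv)
  ultimately have "v0 ^ d = w0 ^ d" using tendsto_unique[OF trivial_limit_sequentially] by blast
  then show ?thesis using eq by simp
qed

lemma disjoint_limit:
  fixes x y :: "nat \<Rightarrow> complex set"
  assumes d: "d > 0"
    and ch: "\<And>n. is_chord (x n)" "\<And>n. is_chord (y n)"
    and disj: "\<And>n. geom (x n) \<inter> geom (y n) = {}"
    and sig: "\<And>n. sigma_img d (x n) = sigma_img d (y n)"
    and cx: "(\<lambda>n. cdist (x n) {a,b}) \<longlonglongrightarrow> 0" and cy: "(\<lambda>n. cdist (y n) {p,q}) \<longlonglongrightarrow> 0"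
    and unit: "cmod a = 1" "cmod b = 1" "cmod p = 1" "cmod q = 1"
    and nc: "a ^ d \<noteq> b ^ d"
  shows "geom {a,b} \<inter> geom {p,q} = {}"
proof (rule ccontr)
  assume "geom {a,b} \<inter> geom {p,q} \<noteq> {}"
  then obtain z where z: "z \<in> closed_segment a b" "z \<in> closed_segment p q" by (auto simp: geom_eq)
  obtain an bn where an: "\<And>n. x n = {an n, bn n}" "\<And>n. cmod (an n) = 1" "\<And>n. cmod (bn n) = 1"
    "an \<longlonglongrightarrow> a" "bn \<longlonglongrightarrow> b"
    using align_seq[of x a b] ch cx by metis
  obtain pn qn where pn: "\<And>n. y n = {pn n, qn n}" "\<And>n. cmod (pn n) = 1" "\<And>n. cmod (qn n) = 1"
    "pn \<longlonglongrightarrow> p" "qn \<longlonglongrightarrow> q"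
    using align_seq[of y p q] ch cy by metis
  have endp: "u \<noteq> w" if "u \<in> x n" "w \<in> y n" for u w n
  proof
    assume "u = w"
    have "u \<in> geom (x n)" using that(1) unfolding geom_def by (simp add: hull_inc)
    moreover have "u \<in> geom (y n)" using that(2) \<open>u = w\<close> unfolding geom_def by (simp add: hull_inc)
    ultimately show False using disj[of n] by auto
  qed
  have sg: "{an n ^ d, bn n ^ d} = {pn n ^ d, qn n ^ d}" for n
    using sig[of n] an(1) pn(1) by (simp add: sigma_pair)
  have sg': "{bn n ^ d, an n ^ d} = {pn n ^ d, qn n ^ d}" "{an n ^ d, bn n ^ d} = {qn n ^ d, pn n ^ d}"
    "{bn n ^ d, an n ^ d} = {qn n ^ d, pn n ^ d}" for n
    using sg[of n] by (auto simp: insert_commute)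
  have e1: "\<And>n. an n \<noteq> pn n" "\<And>n. an n \<noteq> qn n" "\<And>n. bn n \<noteq> pn n" "\<And>n. bn n \<noteq> qn n"
    using endp an(1) pn(1) by blast+
  show False
  proof (cases "{a,b} \<inter> {p,q} = {}")
    case False
    then have "a = p \<or> a = q \<or> b = p \<or> b = q" by auto
    then show False
    proof (elim disjE)
      assume "a = p"
      then have "a ^ d = b ^ d"
        using DE[OF d an(4) an(5) pn(4) an(2) pn(2) _ e1(1) sg] by blast
      then show False using nc by simp
    next
      assume "a = q"
      then have "a ^ d = b ^ d"
        using DE[OF d an(4) an(5) pn(5) an(2) pn(3) _ e1(2) sg'(2)] by blast
      then show False using nc by simp
    next
      assume "b = p"
      then have "b ^ d = a ^ d"
        using DE[OF d an(5) an(4) pn(4) an(3) pn(2) _ e1(3) sg'(1)] by blast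
      then show False using nc by simp
    next
      assume "b = q"
      then have "b ^ d = a ^ d"
        using DE[OF d an(5) an(4) pn(5) an(3) pn(3) _ e1(4) sg'(3)] by blast
      then show False using nc by simp
    qed
  next
    case True
    have zle: "cmod z \<le> 1" using seg_cball[OF z(1)] unit by simp
    have "cmod z \<noteq> 1"
    proof
      assume "cmod z = 1"
      then have "z \<in> {a,b}" "z \<in> {p,q}" using seg_circle z unit by blast+
      then show False using True by auto
    qed
    then have zl: "cmod z < 1" using zle by simp
    have ne: "{a,b} \<noteq> {p,q}" using True by auto
    have "eventually (\<lambda>n. closed_segment (an n) (bn n) \<inter> closed_segment (pn n) (qn n) \<inter> ball 0 1 \<noteq> {}) sequentially"
      by (rule cross_persist[OF unit z zl ne an(4,5) pn(4,5) pn(2,3)])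
    moreover have "closed_segment (an n) (bn n) \<inter> closed_segment (pn n) (qn n) = {}" for n
      using disj[of n] an(1) pn(1) by (simp add: geom_eq)
    ultimately show False by simp
  qed
qed



lemma cdist_single: "cdist {b} {a} = cmod (b - a)"
  using cdist_eq[of b b a a] by (simp add: pd_def)

lemma uncountable_arc:
  fixes a :: complex
  assumes "cmod a = 1" "e > 0"
  shows "uncountable {b. cmod b = 1 \<and> cmod (b - a) < e}"
proof -
  have ic: "isCont cis 0"
    using continuous_on_cis[OF continuous_on_id, of UNIV] by (simp add: continuous_on_eq_continuous_at)
  obtain \<delta> where \<delta>: "\<delta> > 0" "\<And>x. dist x 0 < \<delta> \<Longrightarrow> dist (cis x) (cis 0) < e"
    using ic assms(2) unfolding continuous_at_eps_delta by metis
  define \<delta>' where "\<delta>' = min \<delta> pi"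
  have \<delta>': "\<delta>' > 0" "\<delta>' \<le> pi" "\<delta>' \<le> \<delta>" using \<delta>(1) pi_gt_zero by (auto simp: \<delta>'_def)
  have inj: "inj_on (\<lambda>t. a * cis t) {0<..<\<delta>'}"
  proof (rule inj_onI)
    fix s t assume st: "s \<in> {0<..<\<delta>'}" "t \<in> {0<..<\<delta>'}" "a * cis s = a * cis t"
    then have "cis s = cis t" using assms(1) by auto
    then have "Arg (cis s) = Arg (cis t)" by simp
    then show "s = t" using st \<delta>' by (simp add: Arg_cis)
  qed
  have sub: "(\<lambda>t. a * cis t) ` {0<..<\<delta>'} \<subseteq> {b. cmod b = 1 \<and> cmod (b - a) < e}"
  proof
    fix b assume "b \<in> (\<lambda>t. a * cis t) ` {0<..<\<delta>'}"
    then obtain t where t: "t \<in> {0<..<\<delta>'}" "b = a * cis t" by auto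
    have "dist (cis t) (cis 0) < e" using \<delta>(2)[of t] t \<delta>' by auto
    then have "cmod (cis t - 1) < e" by (simp add: dist_norm)
    moreover have "b - a = a * (cis t - 1)" using t by (simp add: algebra_simps)
    ultimately show "b \<in> {b. cmod b = 1 \<and> cmod (b - a) < e}"
      using t assms(1) by (simp add: norm_mult)
  qed
  have "uncountable ((\<lambda>t. a * cis t) ` {0<..<\<delta>'})"
    using countable_image_inj_on[OF _ inj] uncountable_open_interval \<delta>' by auto
  then show ?thesis using sub countable_subset by blast
qed

context sizep
begin

definition PQ :: "complex set set \<Rightarrow> complex set set" where
  "PQ L = {l\<in>L. \<forall>e>0. Q {l'\<in>L. cdist l' l < e}}"

lemma PQ_sub: "PQ L \<subseteq> L" unfolding PQ_def by auto

lemma PQ_deg: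
  assumes L: "lamination L" and a: "cmod a = 1"
  shows "{a} \<in> PQ L"
proof -
  have "Q {l'\<in>L. cdist l' {a} < e}" if "e > 0" for e
  proof -
    have "uncountable ((\<lambda>b. {b}) ` {b. cmod b = 1 \<and> cmod (b - a) < e})"
      using uncountable_arc[OF a that] countable_image_inj_on[of "\<lambda>b. {b}"] by (auto simp: inj_on_def)
    moreover have "(\<lambda>b. {b}) ` {b. cmod b = 1 \<and> cmod (b - a) < e} \<subseteq> {l'\<in>L. cdist l' {a} < e}"
      using lam_deg[OF L] by (auto simp: cdist_single)
    ultimately show ?thesis using Q_unc Q_mono by blast
  qed
  then show ?thesis unfolding PQ_def using lam_deg[OF L a] by auto
qed

lemma PQ_limit:
  fixes l :: "nat \<Rightarrow> complex set"
  assumes L: "lamination L" and ln: "\<And>n. l n \<in> PQ L" and conv: "(\<lambda>n. cdist (l n) {a,b}) \<longlonglongrightarrow> 0"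
    and ab: "cmod a = 1" "cmod b = 1"
  shows "{a,b} \<in> PQ L"
proof -
  have inL: "{a,b} \<in> L" using limit_leaf[OF L _ conv ab] ln PQ_sub by blast
  have "Q {l'\<in>L. cdist l' {a,b} < e}" if e: "e > 0" for e
  proof -
    have "eventually (\<lambda>n. cdist (l n) {a,b} < e/2) sequentially"
      using order_tendstoD(2)[OF conv, of "e/2"] e by simp
    then obtain n where n: "cdist (l n) {a,b} < e/2"
      using eventually_happens' by (metis trivial_limit_sequentially)
    have H: "\<forall>e>0. Q {l'\<in>L. cdist l' (l n) < e}" using ln[of n] unfolding PQ_def by blast
    have "Q {l'\<in>L. cdist l' (l n) < e/2}" using H half_gt_zero[OF e] by blast
    moreover have "{l'\<in>L. cdist l' (l n) < e/2} \<subseteq> {l'\<in>L. cdist l' {a,b} < e}"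
    proof
      fix x assume "x \<in> {l'\<in>L. cdist l' (l n) < e/2}"
      then have "x \<in> L" "cdist x (l n) < e/2" by auto
      moreover have "cdist x {a,b} \<le> cdist x (l n) + cdist (l n) {a,b}" by (rule cdist_triangle)
      ultimately show "x \<in> {l'\<in>L. cdist l' {a,b} < e}" using n by simp
    qed
    ultimately show ?thesis using Q_mono by blast
  qed
  then show ?thesis using inL unfolding PQ_def by auto
qed

lemma PQ_closed:
  assumes L: "lamination L"
  shows "closed (\<Union>l\<in>PQ L. geom l)"
  unfolding closed_sequential_limits
proof (intro allI impI, elim conjE)
  fix z :: "nat \<Rightarrow> complex" and z0
  assume zin: "\<forall>n. z n \<in> (\<Union>l\<in>PQ L. geom l)" and zc: "z \<longlonglongrightarrow> z0"
  have "\<forall>n. \<exists>l. l \<in> PQ L \<and> z n \<in> geom l" using zin by blast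
  then obtain l where l: "\<And>n. l n \<in> PQ L" "\<And>n. z n \<in> geom (l n)" by metis
  have chl: "\<And>n. is_chord (l n)" using l(1) PQ_sub lam_chord[OF L] by blast
  obtain r a0 b0 where r: "strict_mono r" "cmod a0 = 1" "cmod b0 = 1"
    "(\<lambda>n. cdist (l (r n)) {a0, b0}) \<longlonglongrightarrow> 0"
    using chord_seq_conv[of l] chl by metis
  obtain an bn where an: "\<And>n. l (r n) = {an n, bn n}" "\<And>n. cmod (an n) = 1" "\<And>n. cmod (bn n) = 1"
    "an \<longlonglongrightarrow> a0" "bn \<longlonglongrightarrow> b0"
    using align_seq[of "\<lambda>n. l (r n)" a0 b0] chl r(4) by metis
  have "\<exists>t. 0 \<le> t \<and> t \<le> 1 \<and> z (r n) = (1 - t) *\<^sub>R an n + t *\<^sub>R bn n" for n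
    using l(2)[of "r n"] an(1)[of n] by (simp add: geom_eq in_segment)
  then obtain t where t: "\<And>n. t n \<in> {0..1}" "\<And>n. z (r n) = (1 - t n) *\<^sub>R an n + t n *\<^sub>R bn n"
    by (metis atLeastAtMost_iff)
  obtain t0 r2 where t0: "t0 \<in> {0..1}" "strict_mono (r2 :: nat \<Rightarrow> nat)" "(t \<circ> r2) \<longlonglongrightarrow> t0"
    using seq_compactE[OF compact_imp_seq_compact[OF compact_Icc[of 0 "1::real"]]] t(1) by metis
  have "(\<lambda>n. (1 - (t \<circ> r2) n) *\<^sub>R (an \<circ> r2) n + (t \<circ> r2) n *\<^sub>R (bn \<circ> r2) n) \<longlonglongrightarrow> (1 - t0) *\<^sub>R a0 + t0 *\<^sub>R b0"
    using LIMSEQ_subseq_LIMSEQ[OF an(4) t0(2)] LIMSEQ_subseq_LIMSEQ[OF an(5) t0(2)] t0(3)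
    by (intro tendsto_intros) (auto simp: o_def)
  moreover have "(\<lambda>n. (1 - (t \<circ> r2) n) *\<^sub>R (an \<circ> r2) n + (t \<circ> r2) n *\<^sub>R (bn \<circ> r2) n) = z \<circ> r \<circ> r2"
    using t(2) by (auto simp: o_def)
  moreover have "(z \<circ> (r \<circ> r2)) \<longlonglongrightarrow> z0"
    by (rule LIMSEQ_subseq_LIMSEQ[OF zc]) (intro strict_mono_o r(1) t0(2))
  ultimately have "z0 = (1 - t0) *\<^sub>R a0 + t0 *\<^sub>R b0"
    using tendsto_unique[OF trivial_limit_sequentially] by (metis comp_assoc)
  then have z0in: "z0 \<in> geom {a0, b0}" using t0(1) by (auto simp: geom_eq in_segment)
  have "{a0,b0} \<in> PQ L" using PQ_limit[OF L _ r(4) r(2,3)] l(1) by blast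
  then show "z0 \<in> (\<Union>l\<in>PQ L. geom l)" using z0in by blast
qed

lemma PQ_lam:
  assumes L: "lamination L"
  shows "lamination (PQ L)"
  unfolding lamination_def
proof (intro conjI)
  show "\<forall>l\<in>PQ L. is_chord l" using PQ_sub lam_chord[OF L] by blast
  show "\<forall>l1\<in>PQ L. \<forall>l2\<in>PQ L. \<not> cross l1 l2" using PQ_sub lam_nocross[OF L] by blast
  show "\<forall>a\<in>unit_circle. {a} \<in> PQ L" using PQ_deg[OF L] by (simp add: unit_circle_def)
  show "closed (\<Union>l\<in>PQ L. geom l)" by (rule PQ_closed[OF L])
qed

lemma sigma_chord: assumes "is_chord l" shows "is_chord (sigma_img d l)"
proof -
  obtain a b where ab: "cmod a = 1" "cmod b = 1" "l = {a,b}" using chord_ex[OF assms] by metis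
  have "cmod (a^d) = 1" "cmod (b^d) = 1" using ab by (simp_all add: norm_power)
  then show ?thesis unfolding is_chord_def unit_circle_def using ab(3) sigma_pair[of d a b] by auto
qed

lemma fibre_finite:
  assumes "d > 0" "\<And>x. x \<in> S \<Longrightarrow> is_chord x"
  shows "finite {x\<in>S. sigma_img d x = y}"
proof (cases "\<exists>x\<in>S. sigma_img d x = y")
  case True
  then obtain x where "x \<in> S" "sigma_img d x = y" by blast
  moreover have "finite x" using assms(2)[OF \<open>x \<in> S\<close>] unfolding is_chord_def by auto
  ultimately have "finite y" unfolding sigma_img_def by blast
  then have "finite {l. sigma_img d l = y}" using finite_sigma_fibre assms(1) by blast
  then show ?thesis by (rule rev_finite_subset) auto
next
  case False
  have "{x\<in>S. sigma_img d x = y} \<subseteq> {}" using False by blast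
  then show ?thesis using finite_subset by blast
qed

lemma PQ_image:
  assumes d: "d > 0" and SI: "sibling_invariant d L" and l: "l \<in> PQ L"
  shows "sigma_img d l \<in> PQ L"
proof -
  have L: "lamination L" using SI_lam[OF SI] .
  have img: "\<And>l. l \<in> L \<Longrightarrow> sigma_img d l \<in> L" using SI_img[OF SI] .
  have lL: "l \<in> L" using l PQ_sub by blast
  obtain a b where ab: "cmod a = 1" "cmod b = 1" "l = {a,b}" using chord_ex[OF lam_chord[OF L lL]] by metis
  have "Q {l'\<in>L. cdist l' (sigma_img d l) < e}" if e: "e > 0" for e
  proof -
    define S where "S = {l'\<in>L. cdist l' l < e / d}"
    have H: "\<forall>e>0. Q {l'\<in>L. cdist l' l < e}" using l unfolding PQ_def by blast
    have "e / d > 0" using e d by simp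
    then have QS: "Q S" unfolding S_def using H by blast
    have chS: "\<And>x. x \<in> S \<Longrightarrow> is_chord x" unfolding S_def using lam_chord[OF L] by blast
    have "Q (sigma_img d ` S)"
      by (rule Q_img[OF QS fibre_finite[OF d chS]])
    moreover have "sigma_img d ` S \<subseteq> {l'\<in>L. cdist l' (sigma_img d l) < e}"
    proof
      fix m assume "m \<in> sigma_img d ` S"
      then obtain x where x: "x \<in> L" "cdist x l < e / d" "m = sigma_img d x" by (auto simp: S_def)
      obtain c c' where cc: "cmod c = 1" "cmod c' = 1" "x = {c,c'}" using chord_ex[OF lam_chord[OF L x(1)]] by metis
      have "cdist (sigma_img d {c,c'}) (sigma_img d {a,b}) \<le> d * cdist {c,c'} {a,b}"
        using cdist_sigma[of c c' a b d] cc ab by simp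
      then have "cdist m (sigma_img d l) \<le> d * cdist x l"
        using cc(3) ab(3) x(3) by simp
      also have "\<dots> < d * (e / d)" using x(2) d by (intro mult_strict_left_mono) auto
      also have "\<dots> = e" using d by simp
      finally show "m \<in> {l'\<in>L. cdist l' (sigma_img d l) < e}" using img[OF x(1)] x(3) by simp
    qed
    ultimately show ?thesis using Q_mono by blast
  qed
  then show ?thesis using img[OF lL] unfolding PQ_def by auto
qed

end



lemma ev_obtain:
  fixes X :: "nat \<Rightarrow> real"
  assumes "X \<longlonglongrightarrow> 0" "e > 0"
  shows "\<exists>n. X n < e"
proof -
  have "eventually (\<lambda>n. X n < e) sequentially" using order_tendstoD(2)[OF assms] .
  then obtain N where "\<forall>n\<ge>N. X n < e" unfolding eventually_sequentially by blast
  then show ?thesis by blast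
qed

lemma inv_suc_pos: "inverse (real (Suc n)) > 0" by simp

lemma inv_suc_sub: "strict_mono r \<Longrightarrow> (\<lambda>n. inverse (real (Suc (r n)))) \<longlonglongrightarrow> 0"
  using LIMSEQ_subseq_LIMSEQ[OF LIMSEQ_inverse_real_of_nat] by (simp add: o_def)

lemma cdist_sigma_chords:
  assumes "is_chord x" "is_chord y"
  shows "cdist (sigma_img d x) (sigma_img d y) \<le> d * cdist x y"
proof -
  obtain a b where ab: "cmod a = 1" "cmod b = 1" "x = {a,b}" using chord_ex[OF assms(1)] by metis
  obtain c e where ce: "cmod c = 1" "cmod e = 1" "y = {c,e}" using chord_ex[OF assms(2)] by metis
  show ?thesis using cdist_sigma[of a b c e d] ab ce by simp
qed

context sizep
begin

lemma PQ_pre: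
  assumes d: "d > 0" and SI: "sibling_invariant d L" and l: "l \<in> PQ L"
  shows "\<exists>l'\<in>PQ L. sigma_img d l' = l"
proof -
  have L: "lamination L" using SI_lam[OF SI] .
  have lL: "l \<in> L" using l PQ_sub by blast
  obtain a b where ab: "cmod a = 1" "cmod b = 1" "l = {a,b}" using chord_ex[OF lam_chord[OF L lL]] by metis
  have H: "\<forall>e>0. Q {l'\<in>L. cdist l' l < e}" using l unfolding PQ_def by blast
  define T where "T n = {x\<in>L. cdist x l < inverse (real (Suc n))}" for n
  define P where "P n = {x\<in>L. sigma_img d x \<in> T n}" for n
  have QT: "Q (T n)" for n unfolding T_def using H inv_suc_pos by blast
  have QP: "Q (P n)" for n
  proof -
    have "T n \<subseteq> sigma_img d ` P n"
    proof
      fix y assume y: "y \<in> T n"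
      then have "y \<in> L" by (simp add: T_def)
      then obtain x where "x \<in> L" "sigma_img d x = y" using SI_pre[OF SI] by blast
      then show "y \<in> sigma_img d ` P n" using y by (auto simp: P_def)
    qed
    then have "Q (sigma_img d ` P n)" using QT Q_mono by blast
    then show ?thesis by (rule Q_img_rev)
  qed
  have chP: "\<And>n x. x \<in> P n \<Longrightarrow> is_chord x" using lam_chord[OF L] by (auto simp: P_def)
  have "\<forall>n. \<exists>p. cmod (fst p) = 1 \<and> cmod (snd p) = 1 \<and> (\<forall>e>0. Q {x\<in>P n. cdist x {fst p, snd p} < e})"
  proof
    fix n
    obtain \<alpha> \<beta> where "cmod \<alpha> = 1" "cmod \<beta> = 1" "\<And>e. e > 0 \<Longrightarrow> Q {x\<in>P n. cdist x {\<alpha>,\<beta>} < e}"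
      using condensation[of "P n", OF chP[where n=n] QP[of n]] by blast
    then show "\<exists>p. cmod (fst p) = 1 \<and> cmod (snd p) = 1 \<and> (\<forall>e>0. Q {x\<in>P n. cdist x {fst p, snd p} < e})"
      by (intro exI[of _ "(\<alpha>, \<beta>)"]) simp
  qed
  from choice[OF this] obtain pp where pp: "\<forall>n. cmod (fst (pp n)) = 1 \<and> cmod (snd (pp n)) = 1 \<and> (\<forall>e>0. Q {x\<in>P n. cdist x {fst (pp n), snd (pp n)} < e})"
    by blast
  define \<alpha> where "\<alpha> n = fst (pp n)" for n
  define \<beta> where "\<beta> n = snd (pp n)" for n
  have ab': "\<And>n. cmod (\<alpha> n) = 1" "\<And>n. cmod (\<beta> n) = 1" "\<And>n e. e > 0 \<Longrightarrow> Q {x\<in>P n. cdist x {\<alpha> n, \<beta> n} < e}"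
    using pp unfolding \<alpha>_def \<beta>_def by blast+
  have "\<exists>x. x \<in> P n \<and> cdist x {\<alpha> n, \<beta> n} < inverse (real (Suc n))" for n
    using Q_ne[OF ab'(3)[OF inv_suc_pos[of n]]] by blast
  then have "\<forall>n. \<exists>x. x \<in> P n \<and> cdist x {\<alpha> n, \<beta> n} < inverse (real (Suc n))" by blast
  from choice[OF this] obtain x where x: "\<And>n. x n \<in> P n" "\<And>n. cdist (x n) {\<alpha> n, \<beta> n} < inverse (real (Suc n))"
    by blast
  have xL: "x n \<in> L" for n using x(1)[of n] by (simp add: P_def)
  have bound: "cdist (sigma_img d {\<alpha> n, \<beta> n}) l \<le> (d + 1) * inverse (real (Suc n))" for n
  proof -
    have ch1: "is_chord {\<alpha> n, \<beta> n}" using ab' unfolding is_chord_def unit_circle_def by auto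
    have "cdist (sigma_img d {\<alpha> n, \<beta> n}) l \<le> cdist (sigma_img d {\<alpha> n, \<beta> n}) (sigma_img d (x n)) + cdist (sigma_img d (x n)) l"
      by (rule cdist_triangle)
    also have "cdist (sigma_img d {\<alpha> n, \<beta> n}) (sigma_img d (x n)) \<le> d * cdist {\<alpha> n, \<beta> n} (x n)"
      by (rule cdist_sigma_chords[OF ch1 lam_chord[OF L xL]])
    also have "d * cdist {\<alpha> n, \<beta> n} (x n) \<le> d * inverse (real (Suc n))"
      using x(2)[of n] by (intro mult_left_mono) (auto simp: cdist_sym)
    also have "cdist (sigma_img d (x n)) l < inverse (real (Suc n))"
      using x(1)[of n] by (simp add: P_def T_def)
    finally show ?thesis by (simp add: algebra_simps)
  qed
  obtain r a0 b0 where r: "strict_mono r" "cmod a0 = 1" "cmod b0 = 1" "(\<alpha> \<circ> r) \<longlonglongrightarrow> a0" "(\<beta> \<circ> r) \<longlonglongrightarrow> b0"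
    using circle_seq_conv[of \<alpha> \<beta>] ab' by metis
  have conv1: "(\<lambda>n. cdist {\<alpha> (r n), \<beta> (r n)} {a0,b0}) \<longlonglongrightarrow> 0"
    using cdist_conv[OF r(4) r(5)] by (simp add: o_def)
  have ch0: "is_chord {a0,b0}" using r unfolding is_chord_def unit_circle_def by auto
  have "cdist (sigma_img d {a0,b0}) l \<le> 0"
  proof (rule LIMSEQ_le_const)
    show "(\<lambda>n. d * cdist {\<alpha> (r n), \<beta> (r n)} {a0,b0} + (d + 1) * inverse (real (Suc (r n)))) \<longlonglongrightarrow> 0"
      using tendsto_add[OF tendsto_mult[OF tendsto_const conv1] tendsto_mult[OF tendsto_const inv_suc_sub[OF r(1)]]]
      by simp
    show "\<exists>N. \<forall>n\<ge>N. cdist (sigma_img d {a0,b0}) l \<le> d * cdist {\<alpha> (r n), \<beta> (r n)} {a0,b0} + (d + 1) * inverse (real (Suc (r n)))"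
    proof (intro exI allI impI)
      fix n
      have ch1: "is_chord {\<alpha> (r n), \<beta> (r n)}" using ab' unfolding is_chord_def unit_circle_def by auto
      have "cdist (sigma_img d {a0,b0}) l \<le> cdist (sigma_img d {a0,b0}) (sigma_img d {\<alpha> (r n), \<beta> (r n)}) + cdist (sigma_img d {\<alpha> (r n), \<beta> (r n)}) l"
        by (rule cdist_triangle)
      also have "cdist (sigma_img d {a0,b0}) (sigma_img d {\<alpha> (r n), \<beta> (r n)}) \<le> d * cdist {a0,b0} {\<alpha> (r n), \<beta> (r n)}"
        by (rule cdist_sigma_chords[OF ch0 ch1])
      also have "cdist (sigma_img d {\<alpha> (r n), \<beta> (r n)}) l \<le> (d + 1) * inverse (real (Suc (r n)))"
        by (rule bound)
      finally show "cdist (sigma_img d {a0,b0}) l \<le> d * cdist {\<alpha> (r n), \<beta> (r n)} {a0,b0} + (d + 1) * inverse (real (Suc (r n)))"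
        by (simp add: cdist_sym)
    qed
  qed
  then have "cdist (sigma_img d {a0,b0}) l = 0" using cdist_nonneg[of "sigma_img d {a0,b0}" l] by linarith
  then have "cdist {a0^d, b0^d} {a,b} = 0" using ab(3) sigma_pair[of d a0 b0] by simp
  then have "{a0^d, b0^d} = {a,b}" by (rule cdist_zero)
  then have sig0: "sigma_img d {a0,b0} = l" using ab(3) sigma_pair[of d a0 b0] by simp
  have conv2: "(\<lambda>n. cdist (x (r n)) {a0,b0}) \<longlonglongrightarrow> 0"
  proof (rule Lim_null_comparison[OF _ tendsto_add_zero[OF inv_suc_sub[OF r(1)] conv1]])
    show "\<forall>\<^sub>F n in sequentially. norm (cdist (x (r n)) {a0,b0}) \<le> inverse (real (Suc (r n))) + cdist {\<alpha> (r n), \<beta> (r n)} {a0,b0}"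
    proof (rule always_eventually, rule allI)
      fix n
      have "cdist (x (r n)) {a0,b0} \<le> cdist (x (r n)) {\<alpha> (r n), \<beta> (r n)} + cdist {\<alpha> (r n), \<beta> (r n)} {a0,b0}"
        by (rule cdist_triangle)
      then show "norm (cdist (x (r n)) {a0,b0}) \<le> inverse (real (Suc (r n))) + cdist {\<alpha> (r n), \<beta> (r n)} {a0,b0}"
        using x(2)[of "r n"] cdist_nonneg[of "x (r n)" "{a0,b0}"] by simp
    qed
  qed
  have c0L: "{a0,b0} \<in> L" by (rule limit_leaf[OF L _ conv2 r(2,3)]) (rule xL)
  have "Q {l'\<in>L. cdist l' {a0,b0} < e}" if e: "e > 0" for e
  proof -
    obtain n where n: "cdist {\<alpha> (r n), \<beta> (r n)} {a0,b0} < e/2"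
      using ev_obtain[OF conv1 half_gt_zero[OF e]] by blast
    have "Q {x\<in>P (r n). cdist x {\<alpha> (r n), \<beta> (r n)} < e/2}" by (rule ab'(3)[OF half_gt_zero[OF e]])
    moreover have "{x\<in>P (r n). cdist x {\<alpha> (r n), \<beta> (r n)} < e/2} \<subseteq> {l'\<in>L. cdist l' {a0,b0} < e}"
    proof
      fix y assume "y \<in> {x\<in>P (r n). cdist x {\<alpha> (r n), \<beta> (r n)} < e/2}"
      then have y1: "y \<in> L" "cdist y {\<alpha> (r n), \<beta> (r n)} < e/2" unfolding P_def by blast+
      have "cdist y {a0,b0} \<le> cdist y {\<alpha> (r n), \<beta> (r n)} + cdist {\<alpha> (r n), \<beta> (r n)} {a0,b0}" by (rule cdist_triangle)
      then have "cdist y {a0,b0} < e" using n y1(2) by linarith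
      then show "y \<in> {l'\<in>L. cdist l' {a0,b0} < e}" using y1(1) by blast
    qed
    ultimately show ?thesis by (rule Q_mono)
  qed
  then have "{a0,b0} \<in> PQ L" using c0L unfolding PQ_def by blast
  then show ?thesis using sig0 by blast
qed

end



lemma cdist_single_pair: "cdist {w} {A,B} \<ge> cmod (A - B) / 2"
proof -
  have "cdist {w} {A,B} = max (cmod (w - A)) (cmod (w - B))"
    using cdist_eq[of w w A B] by (simp add: pd_def)
  moreover have "cmod (A - B) \<le> cmod (w - A) + cmod (w - B)"
    using tri[of A B w] by (simp add: norm_minus_commute)
  ultimately show ?thesis by simp
qed

lemma crit_single: "critical d m \<Longrightarrow> \<exists>w. sigma_img d m = {w}"
  unfolding critical_def by (auto simp: sigma_pair)

lemma noncrit_near: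
  assumes L: "lamination L" and m: "m \<in> L" and l: "l = {a,b}" "cmod a = 1" "cmod b = 1"
    and ne: "a^d \<noteq> b^d" and close: "d * cdist m l < cmod (a^d - b^d) / 2"
  shows "\<not> critical d m"
proof
  assume "critical d m"
  then obtain w where w: "sigma_img d m = {w}" using crit_single by blast
  have "cdist (sigma_img d m) (sigma_img d l) \<le> d * cdist m l"
    using cdist_sigma_chords[OF lam_chord[OF L m]] l unfolding is_chord_def unit_circle_def by auto
  moreover have "cdist (sigma_img d m) (sigma_img d l) = cdist {w} {a^d,b^d}"
    by (simp only: w l(1) sigma_pair)
  moreover have "cdist {w} {a^d,b^d} \<ge> cmod (a^d - b^d) / 2" by (rule cdist_single_pair)
  ultimately show False using close by linarith
qed

lemma sigma_eq_from_limit: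
  fixes c :: "nat \<Rightarrow> complex set"
  assumes ch: "\<And>n. is_chord (c n)" and c0: "is_chord c0" and ml: "is_chord m"
    and conv: "(\<lambda>n. cdist (c n) c0) \<longlonglongrightarrow> 0"
    and sc: "(\<lambda>n. cdist (sigma_img d (c n)) m) \<longlonglongrightarrow> 0"
  shows "sigma_img d c0 = m"
proof -
  have "cdist (sigma_img d c0) m \<le> 0"
  proof (rule LIMSEQ_le_const)
    show "(\<lambda>n. d * cdist (c n) c0 + cdist (sigma_img d (c n)) m) \<longlonglongrightarrow> 0"
      using tendsto_add[OF tendsto_mult[OF tendsto_const conv] sc] by simp
    show "\<exists>N. \<forall>n\<ge>N. cdist (sigma_img d c0) m \<le> d * cdist (c n) c0 + cdist (sigma_img d (c n)) m"
    proof (intro exI allI impI)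
      fix n
      have "cdist (sigma_img d c0) m \<le> cdist (sigma_img d c0) (sigma_img d (c n)) + cdist (sigma_img d (c n)) m"
        by (rule cdist_triangle)
      moreover have "cdist (sigma_img d c0) (sigma_img d (c n)) \<le> d * cdist c0 (c n)"
        by (rule cdist_sigma_chords[OF c0 ch])
      ultimately show "cdist (sigma_img d c0) m \<le> d * cdist (c n) c0 + cdist (sigma_img d (c n)) m"
        by (simp add: cdist_sym)
    qed
  qed
  then have z: "cdist (sigma_img d c0) m = 0" using cdist_nonneg[of "sigma_img d c0" m] by linarith
  obtain a b where ab: "cmod a = 1" "cmod b = 1" "c0 = {a,b}" using chord_ex[OF c0] by metis
  obtain p q where pq: "cmod p = 1" "cmod q = 1" "m = {p,q}" using chord_ex[OF ml] by metis
  have "cdist {a^d, b^d} {p,q} = 0" using z ab(3) pq(3) sigma_pair[of d a b] by simp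
  then have "{a^d, b^d} = {p,q}" by (rule cdist_zero)
  then show ?thesis using ab pq by (simp add: sigma_pair)
qed

lemma near_K:
  assumes d: "d > 0" and ml: "is_chord m" and r: "r > 0"
  shows "\<exists>\<delta>>0. \<forall>x. is_chord x \<longrightarrow> cdist (sigma_img d x) m < \<delta> \<longrightarrow>
           (\<exists>k. is_chord k \<and> sigma_img d k = m \<and> cdist x k < r)"
proof (rule ccontr)
  assume neg: "\<not> ?thesis"
  have "\<exists>x. is_chord x \<and> cdist (sigma_img d x) m < inverse (real (Suc n)) \<and>
           (\<forall>k. is_chord k \<and> sigma_img d k = m \<longrightarrow> cdist x k \<ge> r)" for n
  proof -
    have "\<not> (\<forall>x. is_chord x \<longrightarrow> cdist (sigma_img d x) m < inverse (real (Suc n)) \<longrightarrow>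
           (\<exists>k. is_chord k \<and> sigma_img d k = m \<and> cdist x k < r))"
      using neg inv_suc_pos[of n] by blast
    then obtain x where "is_chord x" "cdist (sigma_img d x) m < inverse (real (Suc n))"
      "\<not> (\<exists>k. is_chord k \<and> sigma_img d k = m \<and> cdist x k < r)" by blast
    then show ?thesis by (intro exI[of _ x]) (auto simp: not_less)
  qed
  then have "\<forall>n. \<exists>x. is_chord x \<and> cdist (sigma_img d x) m < inverse (real (Suc n)) \<and>
           (\<forall>k. is_chord k \<and> sigma_img d k = m \<longrightarrow> cdist x k \<ge> r)" by blast
  from choice[OF this] obtain x where x: "\<And>n. is_chord (x n)" "\<And>n. cdist (sigma_img d (x n)) m < inverse (real (Suc n))"
    "\<And>n k. is_chord k \<Longrightarrow> sigma_img d k = m \<Longrightarrow> cdist (x n) k \<ge> r" by blast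
  obtain s a0 b0 where s: "strict_mono s" "cmod a0 = 1" "cmod b0 = 1" "(\<lambda>n. cdist (x (s n)) {a0, b0}) \<longlonglongrightarrow> 0"
    using chord_seq_conv[of x] x(1) by metis
  have c0: "is_chord {a0,b0}" using s unfolding is_chord_def unit_circle_def by auto
  have sc: "(\<lambda>n. cdist (sigma_img d (x (s n))) m) \<longlonglongrightarrow> 0"
  proof (rule Lim_null_comparison[OF _ inv_suc_sub[OF s(1)]])
    show "\<forall>\<^sub>F n in sequentially. norm (cdist (sigma_img d (x (s n))) m) \<le> inverse (real (Suc (s n)))"
      using x(2) cdist_nonneg by (intro always_eventually) (simp add: less_imp_le)
  qed
  have "sigma_img d {a0,b0} = m"
    by (rule sigma_eq_from_limit[OF x(1) c0 ml s(4) sc])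
  then have "\<And>n. cdist (x (s n)) {a0,b0} \<ge> r" using x(3) c0 by blast
  moreover obtain n where "cdist (x (s n)) {a0,b0} < r" using ev_obtain[OF s(4) r] by blast
  ultimately show False by (simp add: not_le[symmetric])
qed



context sizep
begin

lemma PQ_sib_nondeg:
  assumes d: "d > 0" and SI: "sibling_invariant d L" and l: "l \<in> PQ L" and nc: "\<not> critical d l"
    and ab: "cmod a = 1" "cmod b = 1" "l = {a,b}" "a \<noteq> b"
  shows "\<exists>f. f 0 = l \<and> (\<forall>i<d. f i \<in> PQ L) \<and>
           (\<forall>i<d. \<forall>j<d. i \<noteq> j \<longrightarrow> geom (f i) \<inter> geom (f j) = {}) \<and>
           (\<forall>i<d. sigma_img d (f i) = sigma_img d l)"
proof -
  have L: "lamination L" using SI_lam[OF SI] .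
  have lL: "l \<in> L" using l PQ_sub by blast
  have chl: "is_chord l" using lam_chord[OF L lL] .
  have ad: "a^d \<noteq> b^d" using nc ab unfolding critical_def by blast
  define D where "D = cmod (a^d - b^d)"
  have D: "D > 0" using ad unfolding D_def by simp
  define sib where "sib m f \<longleftrightarrow> f 0 = m \<and> (\<forall>i<d. f i \<in> L) \<and>
           (\<forall>i<d. \<forall>j<d. i \<noteq> j \<longrightarrow> geom (f i) \<inter> geom (f j) = {}) \<and>
           (\<forall>i<d. sigma_img d (f i) = sigma_img d m)" for m and f :: "nat \<Rightarrow> complex set"
  define g where "g m = (SOME f. sib m f)" for m
  have gs: "sib m (g m)" if "m \<in> L" "\<not> critical d m" for m
  proof -
    have "\<exists>f. sib m f" unfolding sib_def using SI_sib[OF SI that] .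
    then show ?thesis unfolding g_def by (rule someI_ex)
  qed
  define K where "K = {k. is_chord k \<and> sigma_img d k = sigma_img d l}"
  have finK: "finite K"
  proof -
    have "finite (sigma_img d l)" using ab(3) by (simp add: sigma_pair)
    then have "finite {k. sigma_img d k = sigma_img d l}" using finite_sigma_fibre[OF d] by blast
    then show ?thesis unfolding K_def by (rule rev_finite_subset) blast
  qed
  have chsl: "is_chord (sigma_img d l)" using sigma_chord[OF chl] .
  have "\<forall>n. \<exists>\<delta>>0. \<forall>x. is_chord x \<longrightarrow> cdist (sigma_img d x) (sigma_img d l) < \<delta> \<longrightarrow>
           (\<exists>k. is_chord k \<and> sigma_img d k = sigma_img d l \<and> cdist x k < inverse (real (Suc n)))"
    using near_K[OF d chsl] inv_suc_pos by blast
  from choice[OF this] obtain \<delta> where \<delta>: "\<And>n. \<delta> n > 0"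
    "\<And>n x. is_chord x \<Longrightarrow> cdist (sigma_img d x) (sigma_img d l) < \<delta> n \<Longrightarrow>
           (\<exists>k\<in>K. cdist x k < inverse (real (Suc n)))"
    unfolding K_def by blast
  define \<epsilon> where "\<epsilon> n = min (inverse (real (Suc n))) (min (\<delta> n / d) (D / (2 * d)))" for n
  have \<epsilon>: "\<epsilon> n > 0" "\<epsilon> n \<le> inverse (real (Suc n))" "\<epsilon> n \<le> \<delta> n / d" "\<epsilon> n \<le> D / (2 * d)" for n
    using \<delta>(1)[of n] D d unfolding \<epsilon>_def by auto
  have H: "\<forall>e>0. Q {x\<in>L. cdist x l < e}" using l unfolding PQ_def by blast
  define B where "B n = {m\<in>L. cdist m l < \<epsilon> n}" for n
  have QB: "Q (B n)" for n unfolding B_def using H \<epsilon>(1) by blast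
  have Bprop: "m \<in> L \<and> \<not> critical d m \<and> sib m (g m) \<and> cdist m l < \<epsilon> n" if "m \<in> B n" for m n
  proof -
    have m: "m \<in> L" "cdist m l < \<epsilon> n" using that unfolding B_def by blast+
    have "d * cdist m l < d * (D / (2 * d))"
      using m(2) \<epsilon>(4)[of n] d by (intro mult_strict_left_mono) auto
    also have "\<dots> = D / 2" using d by simp
    finally have "\<not> critical d m" using noncrit_near[OF L m(1) ab(3,1,2) ad] unfolding D_def by blast
    then show ?thesis using gs m by blast
  qed
  define Tup where "Tup = (\<Pi>\<^sub>E i\<in>{..<d}. K)"
  have finT: "finite Tup" unfolding Tup_def using finK by (intro finite_PiE) auto
  define A where "A n \<tau> = {m\<in>B n. \<forall>i<d. cdist (g m i) (\<tau> i) < inverse (real (Suc n))}" for n \<tau>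
  have cover: "B n \<subseteq> \<Union> (A n ` Tup)" for n
  proof
    fix m assume mB: "m \<in> B n"
    have mp: "m \<in> L" "sib m (g m)" "cdist m l < \<epsilon> n" using Bprop[OF mB] by blast+
    have ex: "\<exists>k\<in>K. cdist (g m i) k < inverse (real (Suc n))" if i: "i < d" for i
    proof -
      have gi: "g m i \<in> L" "sigma_img d (g m i) = sigma_img d m" using mp(2) i unfolding sib_def by blast+
      have "cdist (sigma_img d m) (sigma_img d l) \<le> d * cdist m l"
        by (rule cdist_sigma_chords[OF lam_chord[OF L mp(1)] chl])
      also have "\<dots> < d * (\<delta> n / d)"
        using mp(3) \<epsilon>(3)[of n] d by (intro mult_strict_left_mono) auto
      also have "\<dots> = \<delta> n" using d by simp
      finally have "cdist (sigma_img d (g m i)) (sigma_img d l) < \<delta> n" using gi(2) by simp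
      then show ?thesis using \<delta>(2)[OF lam_chord[OF L gi(1)]] by blast
    qed
    define \<tau> where "\<tau> = restrict (\<lambda>i. SOME k. k \<in> K \<and> cdist (g m i) k < inverse (real (Suc n))) {..<d}"
    have \<tau>i: "\<tau> i \<in> K \<and> cdist (g m i) (\<tau> i) < inverse (real (Suc n))" if "i < d" for i
    proof -
      have "\<exists>k. k \<in> K \<and> cdist (g m i) k < inverse (real (Suc n))" using ex[OF that] by blast
      then have "(SOME k. k \<in> K \<and> cdist (g m i) k < inverse (real (Suc n))) \<in> K \<and>
          cdist (g m i) (SOME k. k \<in> K \<and> cdist (g m i) k < inverse (real (Suc n))) < inverse (real (Suc n))"
        by (rule someI_ex)
      then show ?thesis using that unfolding \<tau>_def by simp
    qed
    have "\<tau> \<in> Tup" unfolding Tup_def \<tau>_def using \<tau>i by (auto simp: \<tau>_def)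
    moreover have "m \<in> A n \<tau>" unfolding A_def using mB \<tau>i by blast
    ultimately show "m \<in> \<Union> (A n ` Tup)" by blast
  qed
  have "\<exists>\<tau>. \<tau> \<in> Tup \<and> Q (A n \<tau>)" for n
  proof -
    have "Q (\<Union> (A n ` Tup))" using QB[of n] cover[of n] by (rule Q_mono)
    then obtain X where "X \<in> A n ` Tup" "Q X" using Q_Union[of "A n ` Tup"] finT by blast
    then show ?thesis by blast
  qed
  then have "\<forall>n. \<exists>\<tau>. \<tau> \<in> Tup \<and> Q (A n \<tau>)" by blast
  from choice[OF this] obtain \<tau>s where \<tau>s: "\<And>n. \<tau>s n \<in> Tup" "\<And>n. Q (A n (\<tau>s n))" by blast
  have "finite (\<tau>s ` UNIV)" using finT \<tau>s(1) by (meson finite_subset image_subsetI)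
  then obtain n0 where "infinite {n \<in> UNIV. \<tau>s n = \<tau>s n0}"
    using pigeonhole_infinite[of "UNIV :: nat set" \<tau>s] by blast
  define \<tau> where "\<tau> = \<tau>s n0"
  have \<tau>T: "\<tau> \<in> Tup" unfolding \<tau>_def by (rule \<tau>s(1))
  have unb: "\<exists>n\<ge>N. Q (A n \<tau>)" for N
  proof -
    have "infinite {n. \<tau>s n = \<tau>}" using \<open>infinite {n \<in> UNIV. \<tau>s n = \<tau>s n0}\<close> unfolding \<tau>_def by simp
    then obtain n where "n \<ge> N" "\<tau>s n = \<tau>" unfolding infinite_nat_iff_unbounded_le by blast
    then show ?thesis using \<tau>s(2)[of n] by auto
  qed
  have "\<forall>N. \<exists>p. fst p \<ge> N \<and> snd p \<in> A (fst p) \<tau>"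
  proof
    fix N
    obtain n where n: "n \<ge> N" "Q (A n \<tau>)" using unb by blast
    then obtain m where "m \<in> A n \<tau>" using Q_ne by blast
    then show "\<exists>p. fst p \<ge> N \<and> snd p \<in> A (fst p) \<tau>" using n by (intro exI[of _ "(n,m)"]) simp
  qed
  from choice[OF this] obtain pp where pp: "\<And>N. fst (pp N) \<ge> N" "\<And>N. snd (pp N) \<in> A (fst (pp N)) \<tau>" by blast
  define nn where "nn N = fst (pp N)" for N
  define mm where "mm N = snd (pp N)" for N
  have inv_mono: "inverse (real (Suc (nn N))) \<le> inverse (real (Suc N))" for N
    using pp(1)[of N] unfolding nn_def by (simp add: le_imp_inverse_le)
  have mmA: "mm N \<in> A (nn N) \<tau>" for N unfolding mm_def nn_def by (rule pp(2))
  have mmB: "mm N \<in> B (nn N)" for N using mmA[of N] unfolding A_def by blast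
  have mmL: "mm N \<in> L" "sib (mm N) (g (mm N))" "cdist (mm N) l < inverse (real (Suc N))" for N
  proof -
    show "mm N \<in> L" "sib (mm N) (g (mm N))" using Bprop[OF mmB[of N]] by blast+
    have "cdist (mm N) l < \<epsilon> (nn N)" using Bprop[OF mmB[of N]] by blast
    then show "cdist (mm N) l < inverse (real (Suc N))" using \<epsilon>(2)[of "nn N"] inv_mono[of N] by linarith
  qed
  have gclose: "cdist (g (mm N) i) (\<tau> i) < inverse (real (Suc N))" if "i < d" for N i
  proof -
    have "cdist (g (mm N) i) (\<tau> i) < inverse (real (Suc (nn N)))" using mmA[of N] that unfolding A_def by blast
    then show ?thesis using inv_mono[of N] by linarith
  qed
  have gL: "g (mm N) i \<in> L" "sigma_img d (g (mm N) i) = sigma_img d (mm N)" if "i < d" for N i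
    using mmL(2)[of N] that unfolding sib_def by blast+
  have g0: "g (mm N) 0 = mm N" for N using mmL(2)[of N] unfolding sib_def by blast
  have gdisj: "geom (g (mm N) i) \<inter> geom (g (mm N) j) = {}" if "i < d" "j < d" "i \<noteq> j" for N i j
    using mmL(2)[of N] that unfolding sib_def by blast
  have \<tau>K: "\<tau> i \<in> K" if "i < d" for i using \<tau>T that unfolding Tup_def by blast
  have convg: "(\<lambda>N. cdist (g (mm N) i) (\<tau> i)) \<longlonglongrightarrow> 0" if "i < d" for i
  proof (rule Lim_null_comparison[OF _ LIMSEQ_inverse_real_of_nat])
    show "\<forall>\<^sub>F N in sequentially. norm (cdist (g (mm N) i) (\<tau> i)) \<le> inverse (real (Suc N))"
      using gclose[OF that] cdist_nonneg by (intro always_eventually) (simp add: less_imp_le)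
  qed
  have \<tau>rep: "\<exists>p q. cmod p = 1 \<and> cmod q = 1 \<and> \<tau> i = {p,q} \<and> p^d \<noteq> q^d" if "i < d" for i
  proof -
    have ch: "is_chord (\<tau> i)" "sigma_img d (\<tau> i) = sigma_img d l" using \<tau>K[OF that] unfolding K_def by blast+
    obtain p q where pq: "cmod p = 1" "cmod q = 1" "\<tau> i = {p,q}" using chord_ex[OF ch(1)] by metis
    have "{p^d, q^d} = {a^d, b^d}" using ch(2) pq(3) ab(3) by (simp add: sigma_pair)
    then have "p^d \<noteq> q^d" using ad by (auto simp: doubleton_eq_iff)
    then show ?thesis using pq by blast
  qed
  have \<tau>L: "\<tau> i \<in> L" if i: "i < d" for i
  proof -
    obtain p q where pq: "cmod p = 1" "cmod q = 1" "\<tau> i = {p,q}" using \<tau>rep[OF i] by blast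
    have cv: "(\<lambda>N. cdist (g (mm N) i) {p,q}) \<longlonglongrightarrow> 0" using convg[OF i] pq(3) by simp
    have "{p,q} \<in> L" by (rule limit_leaf[where l="\<lambda>N. g (mm N) i", OF L gL(1)[OF i] cv pq(1,2)])
    then show ?thesis using pq(3) by simp
  qed
  have \<tau>0: "\<tau> 0 = l"
  proof -
    have d0: "0 < d" by (rule d)
    have "cdist (\<tau> 0) l \<le> 0"
    proof (rule LIMSEQ_le_const)
      show "(\<lambda>N. cdist (g (mm N) 0) (\<tau> 0) + inverse (real (Suc N))) \<longlonglongrightarrow> 0"
        using tendsto_add[OF convg[OF d0] LIMSEQ_inverse_real_of_nat] by simp
      show "\<exists>N. \<forall>n\<ge>N. cdist (\<tau> 0) l \<le> cdist (g (mm n) 0) (\<tau> 0) + inverse (real (Suc n))"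
      proof (intro exI allI impI)
        fix n
        have "cdist (\<tau> 0) l \<le> cdist (\<tau> 0) (g (mm n) 0) + cdist (g (mm n) 0) l" by (rule cdist_triangle)
        then show "cdist (\<tau> 0) l \<le> cdist (g (mm n) 0) (\<tau> 0) + inverse (real (Suc n))"
          using mmL(3)[of n] g0[of n] by (simp add: cdist_sym)
      qed
    qed
    then have z: "cdist (\<tau> 0) l = 0" using cdist_nonneg[of "\<tau> 0" l] by linarith
    obtain p q where pq: "cmod p = 1" "cmod q = 1" "\<tau> 0 = {p,q}" using \<tau>rep[OF d0] by blast
    have "cdist {p,q} {a,b} = 0" using z pq(3) ab(3) by simp
    then have "{p,q} = {a,b}" by (rule cdist_zero)
    then show ?thesis using pq(3) ab(3) by simp
  qed
  have \<tau>PQ: "\<tau> i \<in> PQ L" if i: "i < d" for i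
  proof -
    have "Q {x\<in>L. cdist x (\<tau> i) < e}" if e: "e > 0" for e
    proof -
      obtain N where N: "inverse (real (Suc N)) < e" using ev_obtain[OF LIMSEQ_inverse_real_of_nat e] by blast
      obtain n where n: "n \<ge> N" "Q (A n \<tau>)" using unb by blast
      have fin: "finite {m\<in>A n \<tau>. g m i = y}" for y
      proof (cases "\<exists>m0\<in>A n \<tau>. g m0 i = y")
        case True
        then obtain m0 where m0: "m0 \<in> A n \<tau>" "g m0 i = y" by blast
        have m0B: "m0 \<in> B n" using m0(1) unfolding A_def by blast
        have "y \<in> L" using Bprop[OF m0B] i m0(2) unfolding sib_def by blast
        then have "finite (sigma_img d y)" using lam_chord[OF L] unfolding is_chord_def sigma_img_def by auto
        then have "finite {m. sigma_img d m = sigma_img d y}" using finite_sigma_fibre[OF d] by blast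
        moreover have "{m\<in>A n \<tau>. g m i = y} \<subseteq> {m. sigma_img d m = sigma_img d y}"
        proof
          fix m assume "m \<in> {m\<in>A n \<tau>. g m i = y}"
          then have mm: "m \<in> B n" "g m i = y" unfolding A_def by blast+
          have "sigma_img d (g m i) = sigma_img d m" using Bprop[OF mm(1)] i unfolding sib_def by blast
          then show "m \<in> {m. sigma_img d m = sigma_img d y}" using mm(2) by simp
        qed
        ultimately show ?thesis by (rule finite_subset[rotated])
      next
        case False
        then have "{m\<in>A n \<tau>. g m i = y} \<subseteq> {}" by blast
        then show ?thesis using finite_subset by blast
      qed
      have "Q ((\<lambda>m. g m i) ` A n \<tau>)" by (rule Q_img[OF n(2) fin])
      moreover have "(\<lambda>m. g m i) ` A n \<tau> \<subseteq> {x\<in>L. cdist x (\<tau> i) < e}"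
      proof
        fix x assume "x \<in> (\<lambda>m. g m i) ` A n \<tau>"
        then obtain m where m: "m \<in> A n \<tau>" "x = g m i" by blast
        have mB: "m \<in> B n" using m(1) unfolding A_def by blast
        have x1: "x \<in> L" using Bprop[OF mB] i m(2) unfolding sib_def by blast
        have x2: "cdist x (\<tau> i) < inverse (real (Suc n))" using m i unfolding A_def by blast
        have x3: "inverse (real (Suc n)) \<le> inverse (real (Suc N))" using n(1) by (simp add: le_imp_inverse_le)
        have "cdist x (\<tau> i) < e" using x2 x3 N by linarith
        then show "x \<in> {x\<in>L. cdist x (\<tau> i) < e}" using x1 by blast
      qed
      ultimately show ?thesis by (rule Q_mono)
    qed
    then show ?thesis using \<tau>L[OF i] unfolding PQ_def by blast
  qed
  have \<tau>disj: "geom (\<tau> i) \<inter> geom (\<tau> j) = {}" if ij: "i < d" "j < d" "i \<noteq> j" for i j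
  proof -
    obtain p q where pq: "cmod p = 1" "cmod q = 1" "\<tau> i = {p,q}" "p^d \<noteq> q^d" using \<tau>rep[OF ij(1)] by blast
    obtain p' q' where pq': "cmod p' = 1" "cmod q' = 1" "\<tau> j = {p',q'}" using \<tau>rep[OF ij(2)] by blast
    have "geom {p,q} \<inter> geom {p',q'} = {}"
    proof (rule disjoint_limit[OF d])
      show "is_chord (g (mm N) i)" for N using lam_chord[OF L gL(1)[OF ij(1)]] .
      show "is_chord (g (mm N) j)" for N using lam_chord[OF L gL(1)[OF ij(2)]] .
      show "geom (g (mm N) i) \<inter> geom (g (mm N) j) = {}" for N by (rule gdisj[OF ij])
      show "sigma_img d (g (mm N) i) = sigma_img d (g (mm N) j)" for N
        using gL(2)[OF ij(1)] gL(2)[OF ij(2)] by simp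
      show "(\<lambda>N. cdist (g (mm N) i) {p,q}) \<longlonglongrightarrow> 0" using convg[OF ij(1)] pq(3) by simp
      show "(\<lambda>N. cdist (g (mm N) j) {p',q'}) \<longlonglongrightarrow> 0" using convg[OF ij(2)] pq'(3) by simp
    qed (use pq pq' in auto)
    then show ?thesis using pq(3) pq'(3) by simp
  qed
  have \<tau>sig: "sigma_img d (\<tau> i) = sigma_img d l" if "i < d" for i using \<tau>K[OF that] unfolding K_def by blast
  show ?thesis
    by (rule exI[of _ \<tau>]) (use \<tau>0 \<tau>PQ \<tau>disj \<tau>sig in blast)
qed

end



lemma geom_single: "geom {x} = {x}" unfolding geom_def by simp

lemma deg_siblings:
  assumes d: "d > 0" and a: "cmod a = 1"
  shows "\<exists>f. f 0 = {a} \<and> (\<forall>i<d. \<exists>b. cmod b = 1 \<and> f i = {b}) \<and>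
           (\<forall>i<d. \<forall>j<d. i \<noteq> j \<longrightarrow> geom (f i) \<inter> geom (f j) = {}) \<and>
           (\<forall>i<d. sigma_img d (f i) = sigma_img d {a})"
proof -
  define c where "c i = cis (2 * pi * real i / real d)" for i
  have bij: "bij_betw c {..<d} {z. z ^ d = 1}" unfolding c_def by (rule Complex.bij_betw_roots_unity[OF d])
  have inj: "inj_on c {..<d}" using bij by (rule bij_betw_imp_inj_on)
  have root: "c i ^ d = 1" if "i < d" for i using bij that unfolding bij_betw_def by auto
  define f where "f i = {a * c i}" for i
  have a0: "a \<noteq> 0" using a by auto
  have "f 0 = {a}" unfolding f_def c_def by simp
  moreover have "\<forall>i<d. \<exists>b. cmod b = 1 \<and> f i = {b}"
    unfolding f_def c_def using a by (auto simp: norm_mult)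
  moreover have "\<forall>i<d. \<forall>j<d. i \<noteq> j \<longrightarrow> geom (f i) \<inter> geom (f j) = {}"
  proof (intro allI impI)
    fix i j assume ij: "i < d" "j < d" "i \<noteq> j"
    then have "c i \<noteq> c j" using inj unfolding inj_on_def by blast
    then have "a * c i \<noteq> a * c j" using a0 by simp
    then show "geom (f i) \<inter> geom (f j) = {}" unfolding f_def geom_single by simp
  qed
  moreover have "\<forall>i<d. sigma_img d (f i) = sigma_img d {a}"
    unfolding f_def sigma_img_def using root by (simp add: power_mult_distrib)
  ultimately show ?thesis by blast
qed

context sizep
begin

theorem PQ_SI:
  assumes d: "d > 0" and SI: "sibling_invariant d L"
  shows "sibling_invariant d (PQ L)"
proof -
  have L: "lamination L" using SI_lam[OF SI] .
  have s1: "lamination (PQ L)" by (rule PQ_lam[OF L])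
  have s2: "\<forall>l\<in>PQ L. sigma_img d l \<in> PQ L" using PQ_image[OF d SI] by blast
  have s3: "\<forall>l\<in>PQ L. \<exists>l'\<in>PQ L. sigma_img d l' = l" using PQ_pre[OF d SI] by blast
  have s4: "\<exists>f :: nat \<Rightarrow> complex set. f 0 = l \<and>
           (\<forall>i<d. f i \<in> PQ L) \<and>
           (\<forall>i<d. \<forall>j<d. i \<noteq> j \<longrightarrow> geom (f i) \<inter> geom (f j) = {}) \<and>
           (\<forall>i<d. sigma_img d (f i) = sigma_img d l)" if l: "l \<in> PQ L" and nc: "\<not> critical d l" for l
  proof -
    have lL: "l \<in> L" using l PQ_sub by blast
    obtain a b where ab: "cmod a = 1" "cmod b = 1" "l = {a,b}" using chord_ex[OF lam_chord[OF L lL]] by metis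
    show ?thesis
    proof (cases "a = b")
      case True
      then have la: "l = {a}" using ab(3) by simp
      obtain f where f: "f 0 = {a}" "\<forall>i<d. \<exists>b. cmod b = 1 \<and> f i = {b}"
          "\<forall>i<d. \<forall>j<d. i \<noteq> j \<longrightarrow> geom (f i) \<inter> geom (f j) = {}"
          "\<forall>i<d. sigma_img d (f i) = sigma_img d {a}"
        using deg_siblings[OF d ab(1)] by blast
      have "\<forall>i<d. f i \<in> PQ L"
      proof (intro allI impI)
        fix i assume "i < d"
        then obtain b' where "cmod b' = 1" "f i = {b'}" using f(2) by blast
        then show "f i \<in> PQ L" using PQ_deg[OF L] by simp
      qed
      then show ?thesis using f la by blast
    next
      case False
      show ?thesis by (rule PQ_sib_nondeg[OF d SI l nc ab False])
    qed
  qed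
  show ?thesis unfolding sibling_invariant_def
    using s1 s2 s3 s4 by blast
qed

end

lemma sizep_unc: "sizep (\<lambda>S. uncountable S)"
proof
  show "uncountable T" if "uncountable S" "S \<subseteq> T" for S T :: "complex set set"
    using that countable_subset by blast
  show "uncountable A \<or> uncountable B" if "uncountable (A \<union> B)" for A B :: "complex set set"
    using that countable_Un by blast
  show "\<not> uncountable ({} :: complex set set)" by simp
  show "uncountable (f ` S)" if "uncountable S" "\<And>y. finite {x\<in>S. f x = y}" for S :: "complex set set" and f
  proof
    assume c: "countable (f ` S)"
    have "S = (\<Union>y\<in>f ` S. {x\<in>S. f x = y})" by blast
    moreover have "countable (\<Union>y\<in>f ` S. {x\<in>S. f x = y})"
      using c that(2) countable_finite by blast
    ultimately show False using that(1) by simp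
  qed
  show "uncountable S" if "uncountable (f ` S)" for S :: "complex set set" and f :: "complex set \<Rightarrow> complex set"
    using that countable_image by blast
  show "uncountable S" if "uncountable S" for S :: "complex set set" using that .
qed

lemma sizep_inf: "sizep (\<lambda>S. infinite S)"
proof
  show "infinite T" if "infinite S" "S \<subseteq> T" for S T :: "complex set set"
    using that finite_subset by blast
  show "infinite A \<or> infinite B" if "infinite (A \<union> B)" for A B :: "complex set set"
    using that by simp
  show "\<not> infinite ({} :: complex set set)" by simp
  show "infinite (f ` S)" if "infinite S" "\<And>y. finite {x\<in>S. f x = y}" for S :: "complex set set" and f
  proof
    assume c: "finite (f ` S)"
    have "S = (\<Union>y\<in>f ` S. {x\<in>S. f x = y})" by blast
    moreover have "finite (\<Union>y\<in>f ` S. {x\<in>S. f x = y})"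
      using c that(2) by blast
    ultimately show False using that(1) by simp
  qed
  show "infinite S" if "infinite (f ` S)" for S :: "complex set set" and f :: "complex set \<Rightarrow> complex set"
    using that finite_imageI by blast
  show "infinite S" if "uncountable S" for S :: "complex set set" using that uncountable_infinite by blast
qed



lemma PQ_eq: "sizep Q \<Longrightarrow> sizep.PQ Q L = {l\<in>L. \<forall>e>0. Q {l'\<in>L. cdist l' l < e}}"
  by (rule sizep.PQ_def)

lemmas PQ_eq_unc = PQ_eq[OF sizep_unc]
lemmas PQ_eq_inf = PQ_eq[OF sizep_inf]

lemma haus_le_cd: assumes "is_chord x" "is_chord y" shows "hausdist (geom x) (geom y) \<le> cdist x y"
proof -
  obtain a b where ab: "x = {a,b}" using chord_ex[OF assms(1)] by metis
  obtain c c' where cc: "y = {c,c'}" using chord_ex[OF assms(2)] by metis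
  show ?thesis unfolding ab cc by (rule hausdist_le_cdist)
qed

lemma cd_lt_haus:
  assumes "is_chord x" "is_chord y" "e > 0" "hausdist (geom x) (geom y) < eta e"
  shows "cdist x y < e"
proof -
  obtain a b where ab: "cmod a = 1" "cmod b = 1" "x = {a,b}" using chord_ex[OF assms(1)] by metis
  obtain c c' where cc: "cmod c = 1" "cmod c' = 1" "y = {c,c'}" using chord_ex[OF assms(2)] by metis
  show ?thesis using cdist_le_hausdist[OF ab(1,2) cc(1,2) assms(3)] assms(4) ab(3) cc(3) by simp
qed

lemma perfect_part_eq:
  assumes L: "lamination L"
  shows "perfect_part L = sizep.PQ (\<lambda>S. uncountable S) L"
  unfolding PQ_eq_unc perfect_part_def
proof (intro Collect_cong conj_cong refl)
  fix l assume lL: "l \<in> L"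
  have chl: "is_chord l" using lam_chord[OF L lL] .
  show "(\<forall>e>0. uncountable {l'\<in>L. hausdist (geom l') (geom l) < e}) =
        (\<forall>e>0. uncountable {l'\<in>L. cdist l' l < e})"
  proof
    assume H: "\<forall>e>0. uncountable {l'\<in>L. hausdist (geom l') (geom l) < e}"
    show "\<forall>e>0. uncountable {l'\<in>L. cdist l' l < e}"
    proof (intro allI impI)
      fix e :: real assume e: "e > 0"
      have "uncountable {l'\<in>L. hausdist (geom l') (geom l) < eta e}" using H eta_pos[OF e] by blast
      moreover have "{l'\<in>L. hausdist (geom l') (geom l) < eta e} \<subseteq> {l'\<in>L. cdist l' l < e}"
        using cd_lt_haus[OF _ chl e] lam_chord[OF L] by blast
      ultimately show "uncountable {l'\<in>L. cdist l' l < e}" using countable_subset by blast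
    qed
  next
    assume H: "\<forall>e>0. uncountable {l'\<in>L. cdist l' l < e}"
    show "\<forall>e>0. uncountable {l'\<in>L. hausdist (geom l') (geom l) < e}"
    proof (intro allI impI)
      fix e :: real assume e: "e > 0"
      have "uncountable {l'\<in>L. cdist l' l < e}" using H e by blast
      moreover have "{l'\<in>L. cdist l' l < e} \<subseteq> {l'\<in>L. hausdist (geom l') (geom l) < e}"
      proof
        fix x assume x: "x \<in> {l'\<in>L. cdist l' l < e}"
        then have "hausdist (geom x) (geom l) \<le> cdist x l" using haus_le_cd[OF lam_chord[OF L] chl] by blast
        then show "x \<in> {l'\<in>L. hausdist (geom l') (geom l) < e}" using x by auto
      qed
      ultimately show "uncountable {l'\<in>L. hausdist (geom l') (geom l) < e}" using countable_subset by blast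
    qed
  qed
qed

lemma nonisolated_iff:
  assumes L: "lamination C" and l: "l \<in> C"
  shows "\<not> isolated_leaf C l \<longleftrightarrow> (\<forall>e>0. \<exists>l'\<in>C. l' \<noteq> l \<and> cdist l' l < e)"
proof -
  have chl: "is_chord l" using lam_chord[OF L l] .
  show ?thesis unfolding isolated_leaf_def
  proof (simp only: not_not, intro iffI allI impI)
    fix e :: real assume H: "\<forall>e>0. \<exists>l'\<in>C. l' \<noteq> l \<and> hausdist (geom l') (geom l) < e" and e: "e > 0"
    obtain l' where l': "l' \<in> C" "l' \<noteq> l" "hausdist (geom l') (geom l) < eta e" using H eta_pos[OF e] by blast
    then show "\<exists>l'\<in>C. l' \<noteq> l \<and> cdist l' l < e" using cd_lt_haus[OF lam_chord[OF L l'(1)] chl e] by blast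
  next
    fix e :: real assume H: "\<forall>e>0. \<exists>l'\<in>C. l' \<noteq> l \<and> cdist l' l < e" and e: "e > 0"
    obtain l' where l': "l' \<in> C" "l' \<noteq> l" "cdist l' l < e" using H e by blast
    then show "\<exists>l'\<in>C. l' \<noteq> l \<and> hausdist (geom l') (geom l) < e"
      using haus_le_cd[OF lam_chord[OF L l'(1)] chl] by force
  qed
qed

lemma nonisolated_inf:
  assumes L: "lamination C" and l: "l \<in> C" and H: "\<forall>e>0. \<exists>l'\<in>C. l' \<noteq> l \<and> cdist l' l < e"
  shows "l \<in> sizep.PQ (\<lambda>S. infinite S) C"
  unfolding PQ_eq_inf
proof (intro CollectI conjI l allI impI)
  fix e :: real assume e: "e > 0"
  show "infinite {l'\<in>C. cdist l' l < e}"
  proof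
    assume fin: "finite {l'\<in>C. cdist l' l < e}"
    define F where "F = {l'\<in>C. cdist l' l < e} - {l}"
    have finF: "finite F" using fin unfolding F_def by simp
    define e' where "e' = Min (insert e ((\<lambda>x. cdist x l) ` F))"
    have pos: "e' > 0"
    proof -
      have "e' \<in> insert e ((\<lambda>x. cdist x l) ` F)" unfolding e'_def using finF by (intro Min_in) auto
      moreover have "cdist x l > 0" if "x \<in> F" for x
      proof -
        have "x \<in> C" "x \<noteq> l" using that unfolding F_def by blast+
        obtain a b where "x = {a,b}" using chord_ex[OF lam_chord[OF L \<open>x \<in> C\<close>]] by metis
        moreover obtain c c' where "l = {c,c'}" using chord_ex[OF lam_chord[OF L l]] by metis
        ultimately show ?thesis using cdist_pos \<open>x \<noteq> l\<close> by blast
      qed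
      ultimately show ?thesis using e by auto
    qed
    obtain l' where l': "l' \<in> C" "l' \<noteq> l" "cdist l' l < e'" using H pos by blast
    have "e' \<le> e" unfolding e'_def using finF by simp
    then have "l' \<in> F" using l' unfolding F_def by auto
    then have "e' \<le> cdist l' l" unfolding e'_def using finF by simp
    then show False using l'(3) by simp
  qed
qed

lemma inf_nonisolated:
  assumes "l \<in> sizep.PQ Q C" and Qinf: "\<And>S. Q S \<Longrightarrow> infinite S" and sQ: "sizep Q"
  shows "\<forall>e>0. \<exists>l'\<in>C. l' \<noteq> l \<and> cdist l' l < e"
proof (intro allI impI)
  fix e :: real assume e: "e > 0"
  have "Q {l'\<in>C. cdist l' l < e}" using assms(1) e unfolding PQ_eq[OF sQ] by blast
  then have "infinite {l'\<in>C. cdist l' l < e}" by (rule Qinf)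
  then have "\<not> {l'\<in>C. cdist l' l < e} \<subseteq> {l}" using finite_subset[of _ "{l}"] by blast
  then have "{l'\<in>C. cdist l' l < e} - {l} \<noteq> {}" by blast
  then show "\<exists>l'\<in>C. l' \<noteq> l \<and> cdist l' l < e" by blast
qed

lemma unc_ne: "uncountable S \<Longrightarrow> S \<noteq> {}" by auto

lemma sep_bound:
  assumes "cdist {u,v} {p,q} < e"
  shows "cmod (u - v) < cmod (p - q) + 2 * e"
proof -
  have "pd (u,v) (p,q) < e" using assms by (simp add: cdist_eq)
  then have "max (cmod (u - p)) (cmod (v - q)) < e \<or> max (cmod (u - q)) (cmod (v - p)) < e"
    using pd_cases[of u v p q] by (elim disjE) simp_all
  then have "(cmod (u - p) < e \<and> cmod (v - q) < e) \<or> (cmod (u - q) < e \<and> cmod (v - p) < e)"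
    by simp
  moreover have "cmod (u - v) \<le> cmod (u - p) + cmod (p - q) + cmod (q - v)"
    using tri[of u v p] tri[of p v q] by linarith
  moreover have "cmod (u - v) \<le> cmod (u - q) + cmod (q - p) + cmod (p - v)"
    using tri[of u v q] tri[of q v p] by linarith
  moreover have "cmod (q - v) = cmod (v - q)" "cmod (q - p) = cmod (p - q)" "cmod (p - v) = cmod (v - p)"
    by (simp_all add: norm_minus_commute)
  ultimately show ?thesis by linarith
qed

lemma uncountable_nonempty:
  assumes L: "lamination L" and U: "uncountable_lam L"
  shows "\<exists>l\<in>sizep.PQ (\<lambda>S. uncountable S) L. nondegenerate l"
proof -
  define N where "N k = {l\<in>L. \<exists>u v. l = {u,v} \<and> cmod (u - v) \<ge> inverse (real (Suc k))}" for k
  have sub: "{l\<in>L. nondegenerate l} \<subseteq> (\<Union>k. N k)"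
  proof
    fix l assume "l \<in> {l\<in>L. nondegenerate l}"
    then have "l \<in> L" "nondegenerate l" by blast+
    then obtain u v where uv: "l \<in> L" "u \<noteq> v" "l = {u,v}" unfolding nondegenerate_def by blast
    then have pos: "cmod (u - v) > 0" by simp
    obtain n :: nat where n: "n > 0" "inverse (real n) < cmod (u - v)" using ex_inverse_of_nat_less[OF pos] by blast
    have sn: "Suc (n - 1) = n" using n(1) by simp
    have "inverse (real (Suc (n - 1))) \<le> cmod (u - v)" unfolding sn using n(2) by linarith
    then have "l \<in> N (n - 1)" unfolding N_def using uv(1,3) by blast
    then show "l \<in> (\<Union>k. N k)" by blast
  qed
  have "\<exists>k. uncountable (N k)"
  proof (rule ccontr)
    assume nk: "\<nexists>k. uncountable (N k)"
    have "countable (N k)" for k using nk by blast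
    then have "countable (\<Union>k. N k)" by (intro countable_UN) auto
    then have "countable {l\<in>L. nondegenerate l}" using sub countable_subset by blast
    then show False using U unfolding uncountable_lam_def countable_lam_def by blast
  qed
  then obtain k where k: "uncountable (N k)" by blast
  define \<rho> where "\<rho> = inverse (real (Suc k))"
  have \<rho>: "\<rho> > 0" unfolding \<rho>_def by simp
  have chN: "\<And>x. x \<in> N k \<Longrightarrow> is_chord x" using lam_chord[OF L] unfolding N_def by blast
  obtain a0 b0 where c0: "cmod a0 = 1" "cmod b0 = 1" "\<And>e. e > 0 \<Longrightarrow> uncountable {x\<in>N k. cdist x {a0,b0} < e}"
    using sizep.condensation[OF sizep_unc chN k] by blast
  have sep: "cmod (a0 - b0) \<ge> \<rho>"
  proof (rule ccontr)
    assume "\<not> cmod (a0 - b0) \<ge> \<rho>"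
    define e where "e = (\<rho> - cmod (a0 - b0)) / 2"
    have e: "e > 0" using \<open>\<not> cmod (a0 - b0) \<ge> \<rho>\<close> unfolding e_def by simp
    have "{x\<in>N k. cdist x {a0,b0} < e} \<noteq> {}" using unc_ne[OF c0(3)[OF e]] .
    then obtain x where x: "x \<in> N k" "cdist x {a0,b0} < e" by blast
    then obtain u v where uv: "x = {u,v}" "cmod (u - v) \<ge> \<rho>" unfolding N_def \<rho>_def by blast
    have "cdist {u,v} {a0,b0} < e" using x(2) uv(1) by simp
    then have "cmod (u - v) < cmod (a0 - b0) + 2 * e" by (rule sep_bound)
    moreover have "cmod (a0 - b0) + 2 * e = \<rho>" unfolding e_def by (simp add: field_simps)
    ultimately show False using uv(2) by linarith
  qed
  have "\<forall>n. \<exists>x. x \<in> N k \<and> cdist x {a0,b0} < inverse (real (Suc n))"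
  proof
    fix n
    have "{x\<in>N k. cdist x {a0,b0} < inverse (real (Suc n))} \<noteq> {}" using unc_ne[OF c0(3)[OF inv_suc_pos[of n]]] .
    then show "\<exists>x. x \<in> N k \<and> cdist x {a0,b0} < inverse (real (Suc n))" by blast
  qed
  from choice[OF this] obtain x where x: "\<And>n. x n \<in> N k" "\<And>n. cdist (x n) {a0,b0} < inverse (real (Suc n))" by blast
  have xL: "\<And>n. x n \<in> L" using x(1) unfolding N_def by blast
  have conv: "(\<lambda>n. cdist (x n) {a0,b0}) \<longlonglongrightarrow> 0"
  proof (rule Lim_null_comparison[OF _ LIMSEQ_inverse_real_of_nat])
    show "\<forall>\<^sub>F n in sequentially. norm (cdist (x n) {a0,b0}) \<le> inverse (real (Suc n))"
      using x(2) cdist_nonneg by (intro always_eventually) (simp add: less_imp_le)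
  qed
  have inL: "{a0,b0} \<in> L" by (rule limit_leaf[OF L xL conv c0(1,2)])
  have "\<forall>e>0. uncountable {l'\<in>L. cdist l' {a0,b0} < e}"
  proof (intro allI impI)
    fix e :: real assume e: "e > 0"
    have "{x\<in>N k. cdist x {a0,b0} < e} \<subseteq> {l'\<in>L. cdist l' {a0,b0} < e}" unfolding N_def by blast
    then show "uncountable {l'\<in>L. cdist l' {a0,b0} < e}" using c0(3)[OF e] countable_subset by blast
  qed
  then have "{a0,b0} \<in> sizep.PQ (\<lambda>S. uncountable S) L" unfolding PQ_eq_unc using inL by blast
  moreover have "a0 \<noteq> b0" using sep \<rho> by auto
  then have "nondegenerate {a0,b0}" unfolding nondegenerate_def by blast
  ultimately show ?thesis by blast
qed



theorem lemmal:
  fixes d :: nat and L :: "complex set set"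
  assumes "d \<ge> 2"
    and "sibling_invariant d L"
  shows "sibling_invariant d (perfect_part L)
    \<and> (uncountable_lam L \<longrightarrow> perfect_part L \<subseteq> L \<and> nonempty_lam (perfect_part L))
    \<and> (\<forall>C. chief d C \<longrightarrow>
          perfect_lam C \<or>
          (countable_lam C \<and> (\<forall>l\<in>C. nondegenerate l \<longrightarrow> isolated_leaf C l)))"
proof -
  have d0: "d > 0" using assms(1) by simp
  have SI: "sibling_invariant d L" by (rule assms(2))
  have L: "lamination L" using SI_lam[OF SI] .
  have P1: "sibling_invariant d (perfect_part L)"
    unfolding perfect_part_eq[OF L] by (rule sizep.PQ_SI[OF sizep_unc d0 SI])
  have P2: "uncountable_lam L \<longrightarrow> perfect_part L \<subseteq> L \<and> nonempty_lam (perfect_part L)"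
  proof
    assume U: "uncountable_lam L"
    have "perfect_part L \<subseteq> L" unfolding perfect_part_def by blast
    moreover obtain l where "l \<in> sizep.PQ (\<lambda>S. uncountable S) L" "nondegenerate l"
      using uncountable_nonempty[OF L U] by blast
    then have "nonempty_lam (perfect_part L)" unfolding nonempty_lam_def perfect_part_eq[OF L] by blast
    ultimately show "perfect_part L \<subseteq> L \<and> nonempty_lam (perfect_part L)" by blast
  qed
  have P3: "perfect_lam C \<or> (countable_lam C \<and> (\<forall>l\<in>C. nondegenerate l \<longrightarrow> isolated_leaf C l))"
    if ch: "chief d C" for C
  proof -
    have SIC: "sibling_invariant d C" using ch unfolding chief_def by blast
    have minC: "\<And>L'. L' \<subseteq> C \<Longrightarrow> sibling_invariant d L' \<Longrightarrow> nonempty_lam L' \<Longrightarrow> L' = C"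
      using ch unfolding chief_def by blast
    have LC: "lamination C" using SI_lam[OF SIC] .
    show ?thesis
    proof (cases "\<exists>l\<in>C. nondegenerate l \<and> \<not> isolated_leaf C l")
      case True
      then obtain l where l: "l \<in> C" "nondegenerate l" "\<not> isolated_leaf C l" by blast
      have "l \<in> sizep.PQ (\<lambda>S. infinite S) C"
        using nonisolated_inf[OF LC l(1)] nonisolated_iff[OF LC l(1)] l(3) by blast
      then have ne: "nonempty_lam (sizep.PQ (\<lambda>S. infinite S) C)" unfolding nonempty_lam_def using l(2) by blast
      have eq: "sizep.PQ (\<lambda>S. infinite S) C = C"
        by (rule minC[OF sizep.PQ_sub[OF sizep_inf] sizep.PQ_SI[OF sizep_inf d0 SIC] ne])
      have "perfect_lam C"
        unfolding perfect_lam_def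
      proof (intro ballI impI)
        fix l' assume l': "l' \<in> C" "nondegenerate l'"
        have "l' \<in> sizep.PQ (\<lambda>S. infinite S) C" using eq l'(1) by simp
        then have "\<forall>e>0. \<exists>l''\<in>C. l'' \<noteq> l' \<and> cdist l'' l' < e"
          by (rule inf_nonisolated[OF _ _ sizep_inf]) simp
        then show "\<not> isolated_leaf C l'" using nonisolated_iff[OF LC l'(1)] by blast
      qed
      then show ?thesis by blast
    next
      case False
      then have iso: "\<forall>l\<in>C. nondegenerate l \<longrightarrow> isolated_leaf C l" by blast
      have "countable_lam C"
      proof (rule ccontr)
        assume "\<not> countable_lam C"
        then have U: "uncountable_lam C" unfolding uncountable_lam_def by simp
        obtain l where l: "l \<in> sizep.PQ (\<lambda>S. uncountable S) C" "nondegenerate l"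
          using uncountable_nonempty[OF LC U] by blast
        have lC: "l \<in> C" using l(1) sizep.PQ_sub[OF sizep_unc] by blast
        have "\<forall>e>0. \<exists>l''\<in>C. l'' \<noteq> l \<and> cdist l'' l < e"
          by (rule inf_nonisolated[OF l(1) _ sizep_unc]) (rule uncountable_infinite)
        then have "\<not> isolated_leaf C l" using nonisolated_iff[OF LC lC] by blast
        then show False using iso lC l(2) by blast
      qed
      then show ?thesis using iso by blast
    qed
  qed
  show ?thesis using P1 P2 P3 by blast
qed


end
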